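(* With notation as in the context: (a) the $\frac{n(n-1)}2$ elements $\mathcal F_{j,r}$, $1\le j\le h$, $r\in\mathbb Z_n$, form a $\mathbb C$-basis of the Jacobson radical $\mathcal J$ of $G_0^{\mathbb C}(D_n)$, and $\mathcal J^2=0$; (b) for each $r$, $\xi_r^{-1}\mathcal F_{0,r}$ is an idempotent, where $\xi_r=\prod_{j=1}^h(2q^r-\lambda_{j,r})^2\ne0$; for each $1\le j\le h$, $r\in\mathbb Z_n$, there is $\nu_{j,r}\in\mathbb C$ with $\mathcal G_{j,r}^2=\vartheta_{j,r}\mathcal G_{j,r}+\nu_{j,r}\mathcal F_{j,r}$, where $\vartheta_{j,r}=(\lambda_{j,r}-\lambda_{0,r})\prod_{k=1,k\ne j}^h(\lambda_{j,r}-\lambda_{k,r})^2\ne0$, and then $\mathcal G'_{j,r}=\vartheta_{j,r}^{-1}(\mathcal G_{j,r}-\tfrac{\nu_{j,r}}{\vartheta_{j,r}}\mathcal F_{j,r})$ is an idempotent; the $\frac{n(n+1)}2$ idempotents $\xi_r^{-1}\mathcal F_{0,r}$, $\mathcal G'_{j,r}$ are pairwise orthogonal and their images form a basis of $G_0^{\mathbb C}(D_n)/\mathcal J$; (c) if $\mathsf f_{j,r}$, $\mathsf g_{j,r}$ denote the coordinate row vectors of $\mathcal F_{j,r}$, $\mathcal G_{j,r}$ in the basis of classes of simple modules (lexicographic order), then $\mathsf f_{j,r}M=\lambda_{j,r}\mathsf f_{j,r}$ for $0\le j\le h$ and $\mathsf g_{j,r}M=\lambda_{j,r}\mathsf g_{j,r}+\mathsf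 f_{j,r}$ for $1\le j\le h$, where $M$ is the McKay matrix of $V(2,0)$; these give complete sets of left eigenvectors and generalized left eigenvectors of $M$.
   Context: $n=2h+1\ge3$, $q\in\mathbb C$ a primitive $n$-th root of unity, $D_n$ the Drinfeld double of the Taft algebra with simple modules $V(\ell,r)$, $1\le\ell\le n$, $r\in\mathbb Z_n$ ($\dim V(\ell,r)=\ell$), ordered lexicographically. $G_0^{\mathbb C}(D_n)=\mathbb C\otimes_{\mathbb Z}G_0(D_n)$ is the Grothendieck algebra (product from $\otimes$), with basis the classes $[V(\ell,r)]$. Known facts: with $g=[V(1,1)]$, $x=[V(2,0)]$, $G_0^{\mathbb C}(D_n)$ is commutative and $\cong\mathbb C[g,x]/(g^n-1,f(x,g))$ where $f(x,g)=\sum_{i=0}^{h}(-1)^i\frac{n}{n-i}\binom{n-i}{i}g^ix^{n-2i}-2$; moreover $[V(\ell,s)]=g^s\sum_{i=0}^{\lfloor(\ell-1)/2\rfloor}(-1)^i\binom{\ell-1-i}{i}g^ix^{\ell-1-2i}$. Let $\lambda_{j,r}=q^r(q^j+q^{-j})$; then $f(x,q^{2r})=(x-\lambda_{0,r})\prod_{j=1}^h(x-\lambda_{j,r})^2$ as a polynomial in $x$. For $u\in\mathbb Z_n$, $\mathcal E_u=\frac1n\sum_{v=0}^{n-1}q^{-uv}g^v$. Define $\mathcal F_{j,r}=\frac{f(x,q^{2r})}{x-\lambda_{j,r}}\mathcal E_{2r}$ for $0\le j\le h$ and $\mathcal G_{j,r}=\frac{f(x,q^{2r})}{(x-\lambda_{j,r})^2}\mathcal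 E_{2r}$ for $1\le j\le h$ (quotients taken in $\mathbb C[x]$). The McKay matrix $M$ of $V(2,0)$ has $((\ell,r),(\ell',s))$ entry $[V(\ell,r)\otimes V(2,0):V(\ell',s)]$. *)

theory Defs
  imports "HOL-Computational_Algebra.Polynomial"
begin

text \<open>Model of G_0^C(D_n) = C[g,x]/(g^n - 1, f(x,g)).
  Elements are represented by bivariate polynomials of type complex poly poly:
  the outer variable is x, the coefficients are polynomials in g.
  Equality in the algebra is congruence modulo the ideal (g^n - 1, f(x,g)).\<close>

definition hh :: "nat \<Rightarrow> nat" where "hh n = (n - 1) div 2"

definition gpoly :: "complex poly \<Rightarrow> complex poly poly" where
  "gpoly p = [:p:]"

definition xpoly :: "complex poly \<Rightarrow> complex poly poly" where
  "xpoly p = map_poly (\<lambda>c. [:c:]) p"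

definition Gv :: "complex poly poly" where "Gv = gpoly (monom 1 1)"
definition Xv :: "complex poly poly" where "Xv = monom 1 1"

definition sc :: "complex \<Rightarrow> complex poly poly \<Rightarrow> complex poly poly" where
  "sc c P = smult [:c:] P"

definition fpol :: "nat \<Rightarrow> complex poly poly" where
  "fpol n = (\<Sum>i\<in>{0..hh n}. monom (monom ((-1)^i * of_nat n / of_nat (n - i)
              * of_nat ((n - i) choose i)) i) (n - 2*i)) - 2"

definition fx :: "nat \<Rightarrow> complex \<Rightarrow> complex poly" where
  "fx n z = map_poly (\<lambda>c. poly c z) (fpol n)"

definition congI :: "nat \<Rightarrow> complex poly poly \<Rightarrow> complex poly poly \<Rightarrow> bool" where
  "congI n P Q \<longleftrightarrow> (\<exists>A B. P - Q = A * gpoly (monom 1 n - 1) + B * fpol n)"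

text \<open>Ideals of the quotient algebra, as saturated sets of representatives.\<close>
definition A_ideal :: "nat \<Rightarrow> complex poly poly set \<Rightarrow> bool" where
  "A_ideal n S \<longleftrightarrow> 0 \<in> S \<and> (\<forall>P\<in>S. \<forall>Q\<in>S. P + Q \<in> S) \<and> (\<forall>P\<in>S. \<forall>R. R * P \<in> S)
     \<and> (\<forall>P\<in>S. \<forall>Q. congI n P Q \<longrightarrow> Q \<in> S)"

definition A_maximal :: "nat \<Rightarrow> complex poly poly set \<Rightarrow> bool" where
  "A_maximal n S \<longleftrightarrow> A_ideal n S \<and> 1 \<notin> S \<and>
     (\<forall>T. A_ideal n T \<and> S \<subseteq> T \<longrightarrow> T = S \<or> 1 \<in> T)"

definition jac :: "nat \<Rightarrow> complex poly poly set" where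
  "jac n = {P. \<forall>S. A_maximal n S \<longrightarrow> P \<in> S}"

definition idempotentA :: "nat \<Rightarrow> complex poly poly \<Rightarrow> bool" where
  "idempotentA n P \<longleftrightarrow> congI n (P * P) P"

definition lam :: "complex \<Rightarrow> nat \<Rightarrow> nat \<Rightarrow> complex" where
  "lam q j r = q ^ r * (q ^ j + inverse (q ^ j))"

definition Eu :: "nat \<Rightarrow> complex \<Rightarrow> nat \<Rightarrow> complex poly poly" where
  "Eu n q u = gpoly (\<Sum>v<n. monom (inverse (of_nat n) * inverse (q ^ (u * v))) v)"

definition Fc :: "nat \<Rightarrow> complex \<Rightarrow> nat \<Rightarrow> nat \<Rightarrow> complex poly poly" where
  "Fc n q j r = xpoly (fx n (q ^ (2*r)) div [:- lam q j r, 1:]) * Eu n q (2*r)"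

definition Gc :: "nat \<Rightarrow> complex \<Rightarrow> nat \<Rightarrow> nat \<Rightarrow> complex poly poly" where
  "Gc n q j r = xpoly (fx n (q ^ (2*r)) div ([:- lam q j r, 1:] ^ 2)) * Eu n q (2*r)"

definition xi :: "nat \<Rightarrow> complex \<Rightarrow> nat \<Rightarrow> complex" where
  "xi n q r = (\<Prod>j\<in>{1..hh n}. (2 * q ^ r - lam q j r) ^ 2)"

definition theta :: "nat \<Rightarrow> complex \<Rightarrow> nat \<Rightarrow> nat \<Rightarrow> complex" where
  "theta n q j r = (lam q j r - lam q 0 r) * (\<Prod>k\<in>{1..hh n} - {j}. (lam q j r - lam q k r) ^ 2)"

definition nu :: "nat \<Rightarrow> complex \<Rightarrow> nat \<Rightarrow> nat \<Rightarrow> complex" where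
  "nu n q j r = (SOME v. congI n (Gc n q j r * Gc n q j r)
                    (sc (theta n q j r) (Gc n q j r) + sc v (Fc n q j r)))"

definition Gp :: "nat \<Rightarrow> complex \<Rightarrow> nat \<Rightarrow> nat \<Rightarrow> complex poly poly" where
  "Gp n q j r = sc (inverse (theta n q j r))
       (Gc n q j r - sc (nu n q j r / theta n q j r) (Fc n q j r))"

definition Eid :: "nat \<Rightarrow> complex \<Rightarrow> nat \<Rightarrow> nat \<Rightarrow> complex poly poly" where
  "Eid n q j r = (if j = 0 then sc (inverse (xi n q r)) (Fc n q 0 r) else Gp n q j r)"

definition Vcls :: "nat \<Rightarrow> nat \<Rightarrow> complex poly poly" where
  "Vcls l s = Gv ^ s * (\<Sum>i\<in>{0..(l - 1) div 2}.
       sc ((-1) ^ i * of_nat ((l - 1 - i) choose i)) (Gv ^ i * Xv ^ (l - 1 - 2*i)))"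

definition idxV :: "nat \<Rightarrow> (nat \<times> nat) set" where
  "idxV n = {1..n} \<times> {0..<n}"

definition coord :: "nat \<Rightarrow> complex poly poly \<Rightarrow> nat \<times> nat \<Rightarrow> complex" where
  "coord n P = (THE c. (\<forall>k. k \<notin> idxV n \<longrightarrow> c k = 0) \<and>
        congI n P (\<Sum>k\<in>idxV n. sc (c k) (Vcls (fst k) (snd k))))"

text \<open>McKay matrix of V(2,0): entry ((l,r),(l',s)) = [V(l,r) (x) V(2,0) : V(l',s)],
  i.e. the coefficient of [V(l',s)] in [V(l,r)] * x.\<close>
definition McKay :: "nat \<Rightarrow> nat \<times> nat \<Rightarrow> nat \<times> nat \<Rightarrow> complex" where
  "McKay n k k' = coord n (Vcls (fst k) (snd k) * Xv) k'"

definition vecmat :: "nat \<Rightarrow> (nat \<times> nat \<Rightarrow> complex) \<Rightarrow> (nat \<times> nat \<Rightarrow> nat \<times> nat \<Rightarrow> complex)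
    \<Rightarrow> nat \<times> nat \<Rightarrow> complex" where
  "vecmat n w M k' = (\<Sum>k\<in>idxV n. w k * M k k')"

end

theory Submission
  imports Defs
begin

lemma map_poly_add_hom:
  assumes "f 0 = 0" "\<And>a b. f (a+b) = f a + f b"
  shows "map_poly f (p + q) = map_poly f p + map_poly f q"
  by (intro poly_eqI) (simp add: coeff_map_poly assms)

lemma map_poly_mult_hom:
  fixes f :: "'a::comm_ring_1 \<Rightarrow> 'b::comm_ring_1"
  assumes "f 0 = 0" "\<And>a b. f (a+b) = f a + f b" "\<And>a b. f (a*b) = f a * f b"
  shows "map_poly f (p * q) = map_poly f p * map_poly f q"
proof (induction p)
  case 0 show ?case by simp
next
  case (pCons a p)
  have "map_poly f (pCons a p * q) = map_poly f (smult a q + pCons 0 (p*q))" by simp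
  also have "\<dots> = smult (f a) (map_poly f q) + pCons 0 (map_poly f p * map_poly f q)"
    by (simp add: map_poly_add_hom[OF assms(1,2)] map_poly_smult assms map_poly_pCons pCons.IH)
  also have "\<dots> = map_poly f (pCons a p) * map_poly f q" by (simp add: map_poly_pCons assms)
  finally show ?case .
qed

definition ev :: "complex \<Rightarrow> complex poly poly \<Rightarrow> complex poly" where
  "ev z P = map_poly (\<lambda>c. poly c z) P"

lemma ev_add[simp]: "ev z (P + Q) = ev z P + ev z Q"
  unfolding ev_def by (rule map_poly_add_hom) auto

lemma ev_mult[simp]: "ev z (P * Q) = ev z P * ev z Q"
  unfolding ev_def by (rule map_poly_mult_hom) auto

lemma ev_0[simp]: "ev z 0 = 0" by (simp add: ev_def)
lemma ev_1[simp]: "ev z 1 = 1" by (simp add: ev_def)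

lemma ev_uminus[simp]: "ev z (- P) = - ev z P"
  using ev_add[of z P "-P"] by (simp add: eq_neg_iff_add_eq_0 add.commute)

lemma ev_diff[simp]: "ev z (P - Q) = ev z P - ev z Q"
  using ev_add[of z P "-Q"] by simp

lemma ev_sum[simp]: "ev z (\<Sum>i\<in>A. f i) = (\<Sum>i\<in>A. ev z (f i))"
  by (induction A rule: infinite_finite_induct) auto

lemma ev_power[simp]: "ev z (P ^ k) = ev z P ^ k"
  by (induction k) auto

lemma ev_smult[simp]: "ev z (smult c P) = smult (poly c z) (ev z P)"
  unfolding ev_def by (rule map_poly_smult) auto

lemma ev_sc[simp]: "ev z (sc c P) = smult c (ev z P)"
  by (simp add: sc_def)

lemma ev_gpoly[simp]: "ev z (gpoly p) = [:poly p z:]"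
  by (simp add: ev_def gpoly_def map_poly_pCons)

lemma ev_xpoly[simp]: "ev z (xpoly p) = p"
  unfolding ev_def xpoly_def
  by (subst map_poly_map_poly) (auto simp: o_def)

lemma ev_Xv[simp]: "ev z Xv = [:0,1:]"
  by (simp add: ev_def Xv_def map_poly_monom monom_Suc map_poly_pCons)

lemma ev_Gv[simp]: "ev z Gv = [:z:]"
  by (simp add: Gv_def monom_Suc)

lemma ev_monom[simp]: "ev z (monom c k) = monom (poly c z) k"
  by (simp add: ev_def map_poly_monom)

lemma ev_numeral[simp]: "ev z (numeral k) = numeral k"
  by (induction k) (simp_all only: numeral.simps ev_add ev_1)

lemma xpoly_add[simp]: "xpoly (p + q) = xpoly p + xpoly q"
  unfolding xpoly_def by (rule map_poly_add_hom) auto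

lemma xpoly_mult[simp]: "xpoly (p * q) = xpoly p * xpoly q"
  unfolding xpoly_def by (rule map_poly_mult_hom) auto

lemma xpoly_0[simp]: "xpoly 0 = 0" by (simp add: xpoly_def)

lemma sc_mult: "sc c P = gpoly [:c:] * P"
  by (simp add: sc_def gpoly_def)


locale DD =
  fixes n h :: nat and q :: complex
  assumes h1: "h \<ge> 1" and nh: "n = 2*h+1" and qn: "q^n = 1"
    and prim: "\<forall>k. 0<k \<and> k<n \<longrightarrow> q^k \<noteq> 1"
begin

lemma n_pos: "n > 0" using nh by simp
lemma q_nz: "q \<noteq> 0"
proof
  assume "q = 0" hence "q^n = 0" using n_pos by simp
  thus False using qn by simp
qed
lemma hh_eq: "hh n = h" using nh by (simp add: hh_def)

lemma q_pow_mod: "q ^ k = q ^ (k mod n)"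
proof -
  have "q ^ k = q ^ (n * (k div n) + k mod n)" by (simp only: mult_div_mod_eq)
  also have "\<dots> = (q^n)^(k div n) * q^(k mod n)" by (simp only: power_add power_mult)
  finally show ?thesis using qn by simp
qed

lemma q_pow_eq: assumes "a < n" "b < n" "q^a = q^b" shows "a = b"
proof (rule ccontr)
  assume ne: "a \<noteq> b"
  have *: False if ab: "a' < b'" "b' < n" "q^a' = q^b'" for a' b'
  proof -
    have "q^b' = q^a' * q^(b'-a')" using ab(1) by (simp flip: power_add)
    hence "q^(b'-a') = 1" using ab(3) q_nz by simp
    thus False using prim ab(1,2) by simp
  qed
  show False
  proof (cases "a < b")
    case True thus False using * assms by blast
  next
    case False hence "b < a" using ne by simp
    thus False using * assms by metis
  qed
qed

lemma qn_pow: "(q ^ k) ^ n = 1"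
proof -
  have "(q ^ k) ^ n = (q ^ n) ^ k" by (simp only: power_mult[symmetric] mult.commute)
  thus ?thesis using qn by simp
qed

lemma zr_inj: assumes "r < n" "r' < n" "q^(2*r) = q^(2*r')" shows "r = r'"
proof -
  have "(q^r)^2 = (q^r')^2" using assms(3) by (simp only: power_mult[symmetric] mult.commute)
  hence "q^r = q^r' \<or> q^r = - (q^r')" by (simp add: power2_eq_iff)
  moreover have "q^r \<noteq> - (q^r')"
  proof
    assume "q^r = - (q^r')"
    hence "(q^r)^n = (- (q^r'))^n" by simp
    also have "\<dots> = - ((q^r')^n)" by (rule power_minus_odd) (simp add: nh)
    finally show False using qn_pow by simp
  qed
  ultimately have "q^r = q^r'" by simp
  thus ?thesis using q_pow_eq assms(1,2) by simp
qed

lemma geom_root: fixes w :: complex assumes "w^n = 1" shows "(\<Sum>v<n. w^v) = (if w = 1 then of_nat n else 0)"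
proof (cases "w = 1")
  case True then show ?thesis by simp
next
  case False then show ?thesis using geometric_sum[OF False, of n] assms by simp
qed

definition eup :: "nat \<Rightarrow> complex poly" where
  "eup u = (\<Sum>v<n. monom (inverse (of_nat n) * inverse (q ^ (u * v))) v)"

lemma Eu_eq: "Eu n q u = gpoly (eup u)" by (simp add: Eu_def eup_def)

lemma poly_eup: "poly (eup u) x = inverse (of_nat n) * (\<Sum>v<n. (x * inverse (q^u))^v)"
proof -
  have "poly (eup u) x = (\<Sum>v<n. inverse (of_nat n) * inverse (q ^ (u * v)) * x^v)"
    by (simp add: eup_def poly_sum poly_monom)
  also have "\<dots> = (\<Sum>v<n. inverse (of_nat n) * (x * inverse (q^u))^v)"
    by (rule sum.cong[OF refl]) (simp add: power_mult_distrib power_inverse power_mult)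
  finally show ?thesis by (simp add: sum_distrib_left)
qed

lemma delta_sum: assumes "r < n" "r' < n"
  shows "inverse (of_nat n) * (\<Sum>v<n. (q^(2*r') * inverse (q^(2*r)))^v) = (if r' = r then 1 else 0)"
proof -
  let ?w = "q^(2*r') * inverse (q^(2*r))"
  have wn: "?w^n = 1" using qn_pow by (simp add: power_mult_distrib power_inverse)
  have "?w = 1 \<longleftrightarrow> r' = r"
    using zr_inj[OF assms(2,1)] q_nz by (auto simp: field_simps)
  thus ?thesis using geom_root[OF wn] n_pos by auto
qed

lemma ev_Eu: assumes "r < n" "r' < n"
  shows "ev (q^(2*r')) (Eu n q (2*r)) = [:if r' = r then 1 else 0:]"
  using delta_sum[OF assms] by (simp add: Eu_eq poly_eup)

lemma sum_Eu: "(\<Sum>r<n. Eu n q (2*r)) = 1"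
proof -
  have "(\<Sum>r<n. Eu n q (2*r)) = gpoly (\<Sum>r<n. eup (2*r))"
    by (simp add: Eu_eq gpoly_def sum_to_poly)
  also have "(\<Sum>r<n. eup (2*r)) = (\<Sum>v<n. \<Sum>r<n. monom (inverse (of_nat n) * inverse (q ^ (2*r*v))) v)"
    unfolding eup_def by (rule sum.swap)
  also have "\<dots> = (\<Sum>v<n. monom (\<Sum>r<n. inverse (of_nat n) * inverse (q ^ (2*r*v))) v)"
    by (simp only: monom_sum)
  also have "\<dots> = (\<Sum>v<n. monom (if v = 0 then 1 else 0) v)"
  proof (rule sum.cong[OF refl])
    fix v assume v: "v \<in> {..<n}"
    have p: "inverse (q ^ (2*r*v)) = (q^(2*0) * inverse (q^(2*v)))^r" for r
    proof -
      have "q^(2*r*v) = (q^(2*v))^r" by (simp add: power_mult[symmetric] mult_ac)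
      thus ?thesis by (simp add: power_inverse)
    qed
    have "(\<Sum>r<n. inverse (of_nat n) * inverse (q ^ (2*r*v))) =
          inverse (of_nat n) * (\<Sum>r<n. (q^(2*0) * inverse (q^(2*v)))^r)"
      by (simp only: p sum_distrib_left)
    also have "\<dots> = (if v = 0 then 1 else 0)"
      using delta_sum[of v 0] v n_pos by auto
    finally show "monom (\<Sum>r<n. inverse (of_nat n) * inverse (q ^ (2*r*v))) v = monom (if v = 0 then 1 else 0) v"
      by simp
  qed
  also have "\<dots> = (\<Sum>v<n. if v = 0 then 1 else 0)"
    by (rule sum.cong[OF refl]) simp
  also have "\<dots> = 1" using n_pos by (subst sum.delta) auto
  finally show ?thesis by (simp add: gpoly_def one_pCons)
qed

lemma telescope: assumes "z = q^u"
  shows "[:-z,1:] * eup u = smult (z / of_nat n) (monom 1 n - 1)"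
proof -
  have zn: "z^n = 1" using assms qn_pow by simp
  have z0: "z \<noteq> 0" using assms q_nz by simp
  have H: "poly ([:-z,1:] * eup u) x = poly (smult (z / of_nat n) (monom 1 n - 1)) x" for x
  proof -
    let ?y = "x * inverse z"
    have yn: "?y ^ n = x ^ n" using zn by (simp add: power_mult_distrib power_inverse)
    have "(1 - ?y) * (\<Sum>v<n. ?y^v) = 1 - ?y^n" by (rule one_diff_power_eq[symmetric])
    hence e: "(?y - 1) * (\<Sum>v<n. ?y^v) = x^n - 1" using yn
      by (metis minus_diff_eq mult_minus_left)
    have "poly ([:-z,1:] * eup u) x = (x - z) * (inverse (of_nat n) * (\<Sum>v<n. ?y^v))"
      by (simp add: poly_eup assms left_diff_distrib)
    also have "x - z = z * (?y - 1)" using z0 by (simp add: field_simps)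
    also have "z * (?y - 1) * (inverse (of_nat n) * (\<Sum>v<n. ?y^v)) = z * inverse (of_nat n) * ((?y - 1) * (\<Sum>v<n. ?y^v))"
      by (simp only: mult_ac)
    also have "\<dots> = z * inverse (of_nat n) * (x^n - 1)" by (simp only: e)
    also have "\<dots> = poly (smult (z / of_nat n) (monom 1 n - 1)) x"
      by (simp add: poly_monom divide_inverse)
    finally show ?thesis .
  qed
  show ?thesis by (rule poly_eq_poly_eq_iff[THEN iffD1], rule ext, rule H)
qed

definition inI :: "complex poly poly \<Rightarrow> bool" where
  "inI X \<longleftrightarrow> (\<exists>A B. X = A * gpoly (monom 1 n - 1) + B * fpol n)"

lemma congI_inI: "congI n P Q \<longleftrightarrow> inI (P - Q)"
  by (simp add: congI_def inI_def)

lemma inI_0: "inI 0" unfolding inI_def by (rule exI[of _ 0], rule exI[of _ 0]) simp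

lemma inI_add: "inI X \<Longrightarrow> inI Y \<Longrightarrow> inI (X + Y)"
  unfolding inI_def
  by (elim exE, rename_tac A B C D, rule_tac x="A + C" in exI, rule_tac x="B+D" in exI)
     (simp add: algebra_simps)

lemma inI_mult: "inI X \<Longrightarrow> inI (R * X)"
  unfolding inI_def
  by (elim exE, rename_tac A B, rule_tac x="R * A" in exI, rule_tac x="R*B" in exI)
     (simp add: algebra_simps)

lemma inI_diff: "inI X \<Longrightarrow> inI Y \<Longrightarrow> inI (X - Y)"
  using inI_add[of X "(-1) * Y"] inI_mult[of Y "-1"] by simp

lemma inI_sum: "(\<And>i. i \<in> A \<Longrightarrow> inI (f i)) \<Longrightarrow> inI (\<Sum>i\<in>A. f i)"
  by (induction A rule: infinite_finite_induct) (auto intro: inI_0 inI_add)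

lemma inI_fpol: "inI (B * fpol n)"
  unfolding inI_def by (rule exI[of _ 0], rule exI[of _ B]) simp

lemma synth: "P - xpoly (ev z P) = gpoly [:-z,1:] * map_poly (\<lambda>c. synthetic_div c z) P"
proof (rule poly_eqI)
  fix k
  have "coeff P k - [:poly (coeff P k) z:] = [:-z,1:] * synthetic_div (coeff P k) z"
    using synthetic_div_correct'[of z "coeff P k"] by (simp add: algebra_simps)
  thus "coeff (P - xpoly (ev z P)) k = coeff (gpoly [:-z,1:] * map_poly (\<lambda>c. synthetic_div c z) P) k"
    by (simp add: xpoly_def ev_def coeff_map_poly gpoly_def)
qed

lemma gpoly_mult: "gpoly a * gpoly b = gpoly (a * b)"
  by (simp add: gpoly_def)

lemma Eu_kill: "inI (Eu n q u * (P - xpoly (ev (q^u) P)))"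
proof -
  let ?M = "map_poly (\<lambda>c. synthetic_div c (q^u)) P"
  have "Eu n q u * (P - xpoly (ev (q^u) P)) = gpoly (eup u) * (gpoly [:-(q^u),1:] * ?M)"
    by (simp only: synth Eu_eq)
  also have "\<dots> = gpoly ([:-(q^u),1:] * eup u) * ?M"
    by (simp only: gpoly_mult mult.assoc[symmetric] mult.commute[of "eup u"])
  also have "\<dots> = gpoly (smult (q^u / of_nat n) (monom 1 n - 1)) * ?M"
    by (simp only: telescope[OF refl])
  also have "\<dots> = (gpoly [:q^u / of_nat n:] * ?M) * gpoly (monom 1 n - 1)"
    by (simp add: gpoly_def)
  finally show ?thesis unfolding inI_def
    by (intro exI[of _ "gpoly [:q^u / of_nat n:] * ?M"] exI[of _ 0]) simp
qed

lemma ev_fpol: "ev z (fpol n) = fx n z" by (simp add: ev_def fx_def)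

lemma crit: "congI n P Q \<longleftrightarrow> (\<forall>r<n. fx n (q^(2*r)) dvd ev (q^(2*r)) P - ev (q^(2*r)) Q)"
proof
  assume "congI n P Q"
  then obtain A B where AB: "P - Q = A * gpoly (monom 1 n - 1) + B * fpol n"
    unfolding congI_def by blast
  show "\<forall>r<n. fx n (q^(2*r)) dvd ev (q^(2*r)) P - ev (q^(2*r)) Q"
  proof (intro allI impI)
    fix r assume "r < n"
    have "ev (q^(2*r)) P - ev (q^(2*r)) Q = ev (q^(2*r)) (P - Q)" by simp
    also have "\<dots> = ev (q^(2*r)) B * fx n (q^(2*r))"
      using qn_pow[of "2*r"] by (simp add: AB ev_fpol poly_monom)
    finally show "fx n (q^(2*r)) dvd ev (q^(2*r)) P - ev (q^(2*r)) Q" by simp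
  qed
next
  assume H: "\<forall>r<n. fx n (q^(2*r)) dvd ev (q^(2*r)) P - ev (q^(2*r)) Q"
  let ?D = "P - Q"
  have "?D = (\<Sum>r<n. Eu n q (2*r)) * ?D" by (simp add: sum_Eu)
  also have "\<dots> = (\<Sum>r<n. Eu n q (2*r) * ?D)" by (simp add: sum_distrib_right)
  finally have D: "?D = (\<Sum>r<n. Eu n q (2*r) * ?D)" .
  have "inI (Eu n q (2*r) * ?D)" if r: "r < n" for r
  proof -
    let ?z = "q^(2*r)"
    obtain K where K: "ev ?z ?D = fx n ?z * K" using H r by (auto simp: dvd_def)
    have e1: "Eu n q (2*r) * ?D = Eu n q (2*r) * (?D - xpoly (ev ?z ?D)) + Eu n q (2*r) * xpoly (ev ?z ?D)"
      by (simp add: algebra_simps)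
    have X: "xpoly (ev ?z ?D) = xpoly (fx n ?z) * xpoly K" by (simp only: K xpoly_mult)
    have e2: "Eu n q (2*r) * xpoly (ev ?z ?D) = (Eu n q (2*r) * xpoly K) * fpol n
         - xpoly K * (Eu n q (2*r) * (fpol n - xpoly (ev ?z (fpol n))))"
      unfolding X ev_fpol by (simp add: algebra_simps)
    show ?thesis unfolding e1 e2
      by (intro inI_add inI_diff inI_mult inI_fpol Eu_kill)
  qed
  hence "inI ?D" by (subst D) (auto intro: inI_sum)
  thus "congI n P Q" by (simp add: congI_inI)
qed

end

definition ua :: "complex \<Rightarrow> nat \<Rightarrow> nat \<Rightarrow> complex" where
  "ua s m i = (-1)^i * of_nat ((m-i) choose i) * s^(m-2*i)"

definition UU :: "complex \<Rightarrow> nat \<Rightarrow> complex" where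
  "UU s m = (\<Sum>i\<le>m. ua s m i)"

lemma ua_zero: "m < 2*i \<Longrightarrow> ua s m i = 0"
  by (simp add: ua_def binomial_eq_0)

lemma ua_rec0: "ua s (Suc (Suc m)) 0 = s * ua s (Suc m) 0"
  by (simp add: ua_def)

lemma ua_rec: "ua s (Suc (Suc m)) (Suc i) = s * ua s (Suc m) (Suc i) - ua s m i"
proof (cases "2*i+1 \<le> m")
  case True
  then obtain p where p: "m - 2*i = Suc p" by (metis Suc_diff_le Suc_eq_plus1 diff_Suc_Suc diff_zero le_add2 le_trans)
  have e1: "Suc (Suc m) - Suc i = Suc (m - i)" using True by simp
  have e2: "Suc m - Suc i = m - i" by simp
  have e3: "Suc (Suc m) - 2 * Suc i = Suc p" using p by simp
  have e4: "Suc m - 2 * Suc i = p" using p by simp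
  have e5: "m - 2 * i = Suc p" by (rule p)
  show ?thesis
    unfolding ua_def e1 e2 e3 e4 e5 binomial_Suc_Suc
    by (simp add: algebra_simps)
next
  case False
  have z: "(m - i) choose Suc i = 0" using False by (simp add: binomial_eq_0)
  have u1: "ua s (Suc m) (Suc i) = 0" by (simp add: ua_def z)
  show ?thesis
  proof (cases "i \<le> m")
    case True
    have e1: "Suc (Suc m) - Suc i = Suc (m - i)" using True by simp
    have "ua s (Suc (Suc m)) (Suc i) = - ua s m i"
      unfolding ua_def e1 by (simp add: z)
    thus ?thesis by (simp add: u1)
  next
    case False
    thus ?thesis by (simp add: ua_def u1)
  qed
qed

lemma UU_rec: "UU s (Suc (Suc m)) = s * UU s (Suc m) - UU s m"
proof -
  have "UU s (Suc (Suc m)) = ua s (Suc (Suc m)) 0 + (\<Sum>i\<le>Suc m. ua s (Suc (Suc m)) (Suc i))"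
    unfolding UU_def by (rule sum.atMost_Suc_shift)
  also have "\<dots> = s * (ua s (Suc m) 0 + (\<Sum>i\<le>Suc m. ua s (Suc m) (Suc i))) - (\<Sum>i\<le>Suc m. ua s m i)"
    by (simp add: ua_rec ua_rec0 sum_subtractf sum_distrib_left algebra_simps)
  also have "ua s (Suc m) 0 + (\<Sum>i\<le>Suc m. ua s (Suc m) (Suc i)) = (\<Sum>i\<le>Suc (Suc m). ua s (Suc m) i)"
    by (rule sum.atMost_Suc_shift[symmetric])
  also have "\<dots> = UU s (Suc m)" unfolding UU_def by (simp add: ua_zero)
  also have "(\<Sum>i\<le>Suc m. ua s m i) = UU s m" unfolding UU_def by (simp add: ua_zero)
  finally show ?thesis .
qed

definition hs :: "complex \<Rightarrow> complex \<Rightarrow> nat \<Rightarrow> complex" where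
  "hs a b m = (\<Sum>k\<le>m. a^(m-k) * b^k)"

lemma hs_Suc1: "hs a b (Suc m) = a * hs a b m + b^Suc m"
proof -
  have "hs a b (Suc m) = (\<Sum>k\<le>m. a^(Suc m-k) * b^k) + b^Suc m"
    unfolding hs_def by simp
  also have "(\<Sum>k\<le>m. a^(Suc m-k) * b^k) = a * hs a b m"
    unfolding hs_def sum_distrib_left
    by (rule sum.cong[OF refl]) (simp add: Suc_diff_le)
  finally show ?thesis .
qed

lemma hs_Suc2: "hs a b (Suc m) = b * hs a b m + a^Suc m"
proof -
  have "hs a b (Suc m) = a^(Suc m) + (\<Sum>k\<le>m. a^(Suc m - Suc k) * b^Suc k)"
    unfolding hs_def by (subst sum.atMost_Suc_shift) simp
  also have "(\<Sum>k\<le>m. a^(Suc m - Suc k) * b^Suc k) = b * hs a b m"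
    unfolding hs_def sum_distrib_left by (rule sum.cong[OF refl]) simp
  finally show ?thesis by simp
qed

lemma UU_hs: assumes "t \<noteq> 0"
  shows "UU (t + inverse t) m = hs t (inverse t) m \<and> UU (t + inverse t) (Suc m) = hs t (inverse t) (Suc m)"
proof (induction m)
  case 0
  have "UU (t + inverse t) 0 = 1" by (simp add: UU_def ua_def)
  moreover have "UU (t + inverse t) 1 = t + inverse t" by (simp add: UU_def ua_def)
  ultimately show ?case by (simp add: hs_def)
next
  case (Suc m)
  let ?s = "t + inverse t" and ?b = "inverse t"
  have ab: "t * ?b = 1" using assms by simp
  have "hs t ?b (Suc (Suc m)) = ?s * hs t ?b (Suc m) - hs t ?b m"
  proof -
    have "hs t ?b (Suc (Suc m)) = t * hs t ?b (Suc m) + ?b^Suc (Suc m)" by (rule hs_Suc1)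
    also have "?b^Suc (Suc m) = ?b * (hs t ?b (Suc m) - t * hs t ?b m)"
      by (simp add: hs_Suc1[of t ?b m])
    also have "t * hs t ?b (Suc m) + ?b * (hs t ?b (Suc m) - t * hs t ?b m)
       = (t + ?b) * hs t ?b (Suc m) - (t * ?b) * hs t ?b m" by (simp add: algebra_simps)
    finally show ?thesis using ab by simp
  qed
  thus ?case using Suc by (simp add: UU_rec)
qed

lemma hs_diff: assumes "t \<noteq> 0"
  shows "hs t (inverse t) (Suc (Suc m)) - hs t (inverse t) m = t^(Suc (Suc m)) + inverse t ^ Suc (Suc m)"
proof -
  let ?b = "inverse t"
  have "hs t ?b (Suc (Suc m)) = ?b * hs t ?b (Suc m) + t^Suc (Suc m)" by (rule hs_Suc2)
  also have "hs t ?b (Suc m) = t * hs t ?b m + ?b^Suc m" by (rule hs_Suc1)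
  finally have "hs t ?b (Suc (Suc m)) = (t * ?b) * hs t ?b m + ?b^Suc (Suc m) + t^Suc (Suc m)"
    by (simp add: algebra_simps)
  thus ?thesis using assms by simp
qed

context DD begin

lemma coef_id: assumes "1 \<le> i" "i \<le> h"
  shows "of_nat n / of_nat (n - i) * of_nat ((n - i) choose i)
       = (of_nat ((n-i) choose i) + of_nat ((n - 1 - i) choose (i - 1)) :: complex)"
proof -
  obtain k where k: "i = Suc k" using assms by (cases i) auto
  have "n - i > 0" using assms nh by simp
  then obtain N where N: "n - i = Suc N" using gr0_implies_Suc by blast
  have ni: "n = Suc N + i" using N assms nh by linarith
  have abs: "Suc k * (Suc N choose Suc k) = Suc N * (N choose k)" by (rule Suc_times_binomial)
  have "n - 1 - i = N" using N by simp
  hence e: "((n - 1 - i) choose (i - 1)) = N choose k" using k by simp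
  define a :: complex where "a = of_nat (Suc N)"
  define c :: complex where "c = of_nat (Suc N choose i)"
  define d :: complex where "d = of_nat (N choose k)"
  have a0: "a \<noteq> 0" unfolding a_def by (simp only: of_nat_eq_0_iff) 
  have hyp: "of_nat i * c = a * d"
    unfolding a_def c_def d_def k using abs by (simp only: of_nat_mult[symmetric])
  have nn: "(of_nat n :: complex) = a + of_nat i" unfolding a_def ni by simp
  have "(a + of_nat i) / a * c - (c + d) = (of_nat i * c - a * d) / a" using a0
    by (simp add: field_simps)
  also have "\<dots> = 0" using hyp by simp
  finally have "(a + of_nat i) / a * c = c + d" by simp
  thus ?thesis unfolding nn[symmetric] using N e by (simp add: a_def c_def d_def)
qed

definition Dsum :: "complex \<Rightarrow> complex" where
  "Dsum s = (\<Sum>i\<in>{0..h}. (-1)^i * of_nat n / of_nat (n - i) * of_nat ((n - i) choose i) * s^(n - 2*i))"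

lemma Dsum_UU: "Dsum s = UU s n - UU s (n - 2)"
proof -
  define m where "m = n - 2"
  have nm: "n = Suc (Suc m)" using nh h1 unfolding m_def by simp
  have t1: "(\<Sum>i\<in>{0..h}. (-1)^i * of_nat n / of_nat (n - i) * of_nat ((n - i) choose i) * s^(n - 2*i))
     = (\<Sum>i\<in>{0..h}. ua s n i) - (\<Sum>i\<in>{1..h}. ua s m (i - 1))"
  proof -
    have "(\<Sum>i\<in>{0..h}. (-1)^i * of_nat n / of_nat (n - i) * of_nat ((n - i) choose i) * s^(n - 2*i))
       = (\<Sum>i\<in>{0..h}. ua s n i - (if i = 0 then 0 else ua s m (i - 1)))"
    proof (rule sum.cong[OF refl])
      fix i assume i: "i \<in> {0..h}"
      show "(-1)^i * of_nat n / of_nat (n - i) * of_nat ((n - i) choose i) * s^(n - 2*i)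
            = ua s n i - (if i = 0 then 0 else ua s m (i - 1))"
      proof (cases "i = 0")
        case True thus ?thesis using n_pos by (simp add: ua_def)
      next
        case False
        have e1: "m - (i - 1) = n - 1 - i" using False i nm by simp
        have e2: "m - 2 * (i - 1) = n - 2*i" using False i nm by simp
        have si: "(-1::complex)^i = - ((-1)^(i-1))" using False by (cases i) auto
        have "(-1)^i * of_nat n / of_nat (n - i) * of_nat ((n - i) choose i) * s^(n - 2*i)
              = (-1)^i * (of_nat n / of_nat (n - i) * of_nat ((n - i) choose i)) * s^(n - 2*i)"
          by simp
        also have "\<dots> = (-1)^i * (of_nat ((n-i) choose i) + of_nat ((n - 1 - i) choose (i - 1))) * s^(n - 2*i)"
          using coef_id[of i] False i by simp
        also have "\<dots> = ua s n i - ua s m (i - 1)"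
          unfolding ua_def e1 e2 si by (simp add: algebra_simps)
        finally show ?thesis using False by simp
      qed
    qed
    also have "\<dots> = (\<Sum>i\<in>{0..h}. ua s n i) - (\<Sum>i\<in>{0..h}. (if i = 0 then 0 else ua s m (i - 1)))"
      by (rule sum_subtractf)
    also have "(\<Sum>i\<in>{0..h}. (if i = 0 then 0 else ua s m (i - 1))) = (\<Sum>i\<in>{1..h}. ua s m (i - 1))"
      by (rule sum.mono_neutral_cong_right) auto
    finally show ?thesis .
  qed
  have t2: "(\<Sum>i\<in>{0..h}. ua s n i) = UU s n"
    unfolding UU_def
    by (rule sum.mono_neutral_right[symmetric]) (auto simp: ua_zero nh)
  have t3: "(\<Sum>i\<in>{1..h}. ua s m (i - 1)) = (\<Sum>i<h. ua s m i)"
  proof -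
    obtain h' where h': "h = Suc h'" using h1 by (cases h) auto
    have "(\<Sum>i\<in>{1..h}. ua s m (i - 1)) = (\<Sum>i\<in>{Suc 0..Suc h'}. ua s m (i - 1))" using h' by simp
    also have "\<dots> = (\<Sum>i\<in>{0..h'}. ua s m i)" by (subst sum.shift_bounds_cl_Suc_ivl) simp
    also have "\<dots> = (\<Sum>i<h. ua s m i)" using h' by (simp add: lessThan_Suc_atMost atLeast0AtMost)
    finally show ?thesis .
  qed
  have Z: "ua s m i = 0" if "h \<le> i" for i using that h1 by (intro ua_zero) (simp add: m_def nh)
  have t4: "(\<Sum>i<h. ua s m i) = UU s m"
    unfolding UU_def
    by (rule sum.mono_neutral_right[symmetric]) (use Z in \<open>auto simp: m_def nh\<close>)
  have "Dsum s = UU s n - UU s m" unfolding Dsum_def t1 t2 t3 t4 ..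
  thus ?thesis by (simp add: m_def)
qed

lemma Dsum_val: assumes "t \<noteq> 0" shows "Dsum (t + inverse t) = t^n + inverse t ^ n"
proof -
  obtain m where nm: "n = Suc (Suc m)" using nh h1 by (cases n; cases "n - 1") auto
  have "Dsum (t + inverse t) = hs t (inverse t) n - hs t (inverse t) m"
    using Dsum_UU UU_hs[OF assms] nm by simp
  thus ?thesis using hs_diff[OF assms, of m] nm by simp
qed

end

lemma prod_roots_dvd:
  fixes p :: "complex poly"
  assumes "finite S" "\<forall>a\<in>S. poly p a = 0"
  shows "(\<Prod>a\<in>S. [:-a,1:]) dvd p"
  using assms
proof (induction S arbitrary: p rule: finite_induct)
  case empty thus ?case by simp
next
  case (insert a S p)
  have "[:-a,1:] dvd p" using insert.prems by (simp add: poly_eq_0_iff_dvd)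
  then obtain p1 where p1: "p = [:-a,1:] * p1" by (auto simp: dvd_def)
  have "\<forall>b\<in>S. poly p1 b = 0"
  proof
    fix b assume b: "b \<in> S"
    have "poly p b = (b - a) * poly p1 b" by (simp add: p1 algebra_simps)
    moreover have "b \<noteq> a" using b insert.hyps by auto
    ultimately show "poly p1 b = 0" using insert.prems b by simp
  qed
  hence "(\<Prod>a\<in>S. [:-a,1:]) dvd p1" by (rule insert.IH)
  hence "[:-a,1:] * (\<Prod>a\<in>S. [:-a,1:]) dvd [:-a,1:] * p1" by (rule mult_dvd_mono[OF dvd_refl])
  thus ?case using insert.hyps by (simp add: p1)
qed

lemma monic_dvd_eq:
  fixes p Q :: "complex poly"
  assumes "p dvd Q" "Q \<noteq> 0" "degree p = degree Q" "lead_coeff p = 1" "lead_coeff Q = 1"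
  shows "p = Q"
proof -
  obtain c where c: "Q = p * c" using assms(1) by (auto simp: dvd_def)
  have c0: "c \<noteq> 0" and p0: "p \<noteq> 0" using c assms(2) by auto
  have "degree Q = degree p + degree c" using c c0 p0 by (simp add: degree_mult_eq)
  hence dc: "degree c = 0" using assms(3) by simp
  have "lead_coeff c = 1" using c assms(4,5) by (simp add: lead_coeff_mult)
  hence c1: "coeff c 0 = 1" using dc by simp
  have "c = 1"
  proof (rule poly_eqI)
    fix k show "coeff c k = coeff 1 k"
      using c1 dc by (cases k) (auto simp: coeff_eq_0)
  qed
  thus ?thesis using c by simp
qed

lemma monom_minus_1:
  assumes "(k::nat) > 0"
  shows "degree (monom (1::complex) k - 1) = k" "lead_coeff (monom (1::complex) k - 1) = 1"
    "monom (1::complex) k - 1 \<noteq> 0"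
proof -
  have c: "coeff (monom (1::complex) k - 1) k = 1" using assms by (simp add: coeff_monom)
  have "degree (monom (1::complex) k - 1) \<le> k"
    by (rule order.trans[OF degree_diff_le_max]) (simp add: degree_monom_eq)
  moreover have "k \<le> degree (monom (1::complex) k - 1)" using c by (intro le_degree) simp
  ultimately show d: "degree (monom (1::complex) k - 1) = k" by simp
  show "lead_coeff (monom (1::complex) k - 1) = 1" using c d by simp
  show "monom (1::complex) k - 1 \<noteq> 0"
  proof
    assume a: "monom (1::complex) k - 1 = 0"
    have "coeff (monom (1::complex) k - 1) k = 0" by (simp only: a coeff_0)
    thus False using c by simp
  qed
qed

context DD begin

lemma roots_unity_prod: "(\<Prod>j<n. [:-(q^j),1:]) = monom 1 n - 1"
proof -
  have inj: "inj_on (\<lambda>j. q^j) {..<n}" using q_pow_eq by (auto simp: inj_on_def)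
  have "(\<Prod>j<n. [:-(q^j),1:]) = (\<Prod>a\<in>(\<lambda>j. q^j) ` {..<n}. [:-a,1:])"
    by (simp add: prod.reindex[OF inj])
  also have "\<dots> dvd monom 1 n - 1"
    by (rule prod_roots_dvd) (auto simp: poly_monom qn_pow)
  finally have dv: "(\<Prod>j<n. [:-(q^j),1:]) dvd monom 1 n - 1" .
  have dg: "degree (\<Prod>j<n. [:-(q^j),1:]) = n"
    by (subst degree_prod_eq_sum_degree) auto
  have lc: "lead_coeff (\<Prod>j<n. [:-(q^j),1:]) = 1"
    by (simp add: lead_coeff_prod)
  show ?thesis using monic_dvd_eq[OF dv] monom_minus_1[OF n_pos] dg lc by simp
qed

lemma roots_unity_prod_val: "(\<Prod>j<n. (t - q^j)) = t^n - 1"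
proof -
  have "poly (\<Prod>j<n. [:-(q^j),1:]) t = poly (monom 1 n - 1) t" by (simp only: roots_unity_prod)
  thus ?thesis by (simp add: poly_prod poly_monom)
qed

lemma q_inv: "j \<le> n \<Longrightarrow> inverse (q^j) = q^(n-j)"
proof -
  assume j: "j \<le> n"
  have "q^j * q^(n-j) = 1" using j qn by (simp flip: power_add)
  thus ?thesis by (simp add: inverse_unique)
qed

lemma R_val: "(t - 1) * (\<Prod>j\<in>{1..h}. (t - q^j) * (t - inverse (q^j))) = t^n - 1"
proof -
  let ?g = "\<lambda>j. t - q^j"
  have split: "{..<n} = insert 0 ({1..h} \<union> {h+1..2*h})" using nh by auto
  have "(\<Prod>j<n. ?g j) = ?g 0 * ((\<Prod>j\<in>{1..h}. ?g j) * (\<Prod>j\<in>{h+1..2*h}. ?g j))"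
    unfolding split by (subst prod.insert) (auto simp: prod.union_disjoint)
  also have "(\<Prod>j\<in>{h+1..2*h}. ?g j) = (\<Prod>j\<in>{1..h}. ?g (n - j))"
    by (rule prod.reindex_bij_witness[of _ "\<lambda>j. n - j" "\<lambda>j. n - j"]) (auto simp: nh)
  also have "(\<Prod>j\<in>{1..h}. ?g (n - j)) = (\<Prod>j\<in>{1..h}. t - inverse (q^j))"
    by (rule prod.cong[OF refl]) (simp add: q_inv nh)
  finally have "(\<Prod>j<n. ?g j) = (t - 1) * (\<Prod>j\<in>{1..h}. (t - q^j) * (t - inverse (q^j)))"
    by (simp add: prod.distrib)
  thus ?thesis using roots_unity_prod_val by simp
qed

lemma lam0: "lam q 0 r = 2 * q^r" by (simp add: lam_def)

lemma fx_val: assumes y: "y = q^r" and t: "t \<noteq> 0"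
  shows "poly (fx n (q^(2*r))) (y * (t + inverse t)) = t^n + inverse t ^ n - 2"
proof -
  let ?s = "t + inverse t"
  let ?c = "\<lambda>i. (-1)^i * of_nat n / of_nat (n - i) * of_nat ((n - i) choose i) :: complex"
  have yn: "y^n = 1" using y qn_pow by simp
  have "fx n (q^(2*r)) = (\<Sum>i\<in>{0..h}. monom (?c i * (q^(2*r))^i) (n - 2*i)) - 2"
    unfolding ev_fpol[symmetric] fpol_def hh_eq by (simp add: poly_monom)
  hence "poly (fx n (q^(2*r))) (y * ?s) = (\<Sum>i\<in>{0..h}. ?c i * (q^(2*r))^i * (y * ?s)^(n - 2*i)) - 2"
    by (simp add: poly_sum poly_monom)
  also have "(\<Sum>i\<in>{0..h}. ?c i * (q^(2*r))^i * (y * ?s)^(n - 2*i)) = (\<Sum>i\<in>{0..h}. ?c i * ?s^(n - 2*i))"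
  proof (rule sum.cong[OF refl])
    fix i assume i: "i \<in> {0..h}"
    have a1: "(q^(2*r))^i = y^(2*i)" unfolding y by (simp only: power_mult[symmetric]) (simp only: mult_ac)
    have "(q^(2*r))^i * (y * ?s)^(n - 2*i) = y^(2*i) * y^(n - 2*i) * ?s^(n - 2*i)"
      by (simp only: a1 power_mult_distrib mult.assoc)
    also have "\<dots> = y^(2*i + (n - 2*i)) * ?s^(n - 2*i)" by (simp only: power_add)
    also have "2*i + (n - 2*i) = n" using i nh by simp
    finally show "?c i * (q^(2*r))^i * (y * ?s)^(n - 2*i) = ?c i * ?s^(n - 2*i)"
      using yn by (simp add: mult.assoc)
  qed
  also have "\<dots> = Dsum ?s" unfolding Dsum_def ..
  finally show ?thesis using Dsum_val[OF t] by simp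
qed

definition Tp :: "nat \<Rightarrow> complex poly" where
  "Tp r = (\<Prod>j\<in>{1..h}. [:-lam q j r,1:])"

lemma lin_fact: fixes t a y :: complex assumes "t \<noteq> 0" "a \<noteq> 0" "y \<noteq> 0"
  shows "y * (t + inverse t) - y * (a + inverse a) = y * inverse t * ((t - a) * (t - inverse a))"
proof -
  have ai: "a * inverse a = 1" "t * inverse t = 1" using assms by auto
  have "y * inverse t * ((t - a) * (t - inverse a)) = y * (inverse t * t * t - (a + inverse a) * (t * inverse t) + inverse t * (a * inverse a))"
    by (simp add: algebra_simps)
  also have "\<dots> = y * (t + inverse t) - y * (a + inverse a)" using ai by (simp add: algebra_simps mult.commute[of "inverse t"])
  finally show ?thesis ..
qed

lemma f_fact: "fx n (q^(2*r)) = [:-lam q 0 r,1:] * (Tp r)^2"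
proof -
  let ?y = "q^r"
  have y0: "?y \<noteq> 0" using q_nz by simp
  have "poly (fx n (q^(2*r))) x = poly ([:-lam q 0 r,1:] * (Tp r)^2) x" for x
  proof -
    define w where "w = x / ?y"
    define t where "t = (w + csqrt (w^2 - 4)) / 2"
    define t' where "t' = (w - csqrt (w^2 - 4)) / 2"
    have tt: "t * t' = 1" unfolding t_def t'_def by (simp add: field_simps power2_eq_square[symmetric])
    hence t0: "t \<noteq> 0" by auto
    have it: "inverse t = t'" using tt by (simp add: inverse_unique)
    have "t + t' = w" unfolding t_def t'_def by (simp add: field_simps)
    hence sx: "x = ?y * (t + inverse t)" unfolding it w_def using y0 by simp
    have "poly ([:-lam q 0 r,1:] * (Tp r)^2) x
        = (x - lam q 0 r) * (\<Prod>j\<in>{1..h}. x - lam q j r)^2"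
      by (simp add: Tp_def poly_prod left_diff_distrib)
    also have "x - lam q 0 r = ?y * inverse t * ((t - 1) * (t - 1))"
      using lin_fact[OF t0 _ y0, of 1] unfolding sx lam_def by simp
    also have "(\<Prod>j\<in>{1..h}. x - lam q j r) = (\<Prod>j\<in>{1..h}. ?y * inverse t * ((t - q^j) * (t - inverse (q^j))))"
      by (rule prod.cong[OF refl]) (simp add: sx lam_def lin_fact[OF t0 _ y0] q_nz)
    also have "\<dots> = (?y * inverse t)^h * (\<Prod>j\<in>{1..h}. (t - q^j) * (t - inverse (q^j)))"
      by (simp add: prod.distrib)
    finally have e: "poly ([:-lam q 0 r,1:] * (Tp r)^2) x = 
       (?y * inverse t * ((t - 1) * (t - 1))) * ((?y * inverse t)^h * (\<Prod>j\<in>{1..h}. (t - q^j) * (t - inverse (q^j))))^2" .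
    define A where "A = ?y * inverse t"
    define PP where "PP = (\<Prod>j\<in>{1..h}. (t - q^j) * (t - inverse (q^j)))"
    have An: "A^n = ?y^n * inverse t^n" unfolding A_def by (simp only: power_mult_distrib)
    have "A * ((t - 1) * (t - 1)) * (A^h * PP)^2 = (A * A^h * A^h) * ((t - 1) * PP)^2"
      by (simp only: power2_eq_square mult_ac)
    also have "A * A^h * A^h = A^n" unfolding nh by (simp add: mult_2 power_add)
    finally have "poly ([:-lam q 0 r,1:] * (Tp r)^2) x
       = ?y^n * inverse t^n * ((t - 1) * (\<Prod>j\<in>{1..h}. (t - q^j) * (t - inverse (q^j))))^2"
      unfolding e A_def[symmetric] PP_def[symmetric] An .
    also have "\<dots> = inverse t^n * (t^n - 1)^2" using qn_pow by (simp only: R_val) simp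
    also have "\<dots> = t^n + inverse t ^ n - 2" using t0
      by (simp add: power2_eq_square field_simps)
    also have "\<dots> = poly (fx n (q^(2*r))) x" unfolding sx by (rule fx_val[OF refl t0, symmetric])
    finally show ?thesis ..
  qed
  thus ?thesis by (rule poly_eq_poly_eq_iff[THEN iffD1, OF ext])
qed

end

context DD begin

lemma lam_inj: assumes "j \<le> h" "k \<le> h" "lam q j r = lam q k r" shows "j = k"
proof -
  define a where "a = q^j"
  define b where "b = q^k"
  have a0: "a \<noteq> 0" and b0: "b \<noteq> 0" unfolding a_def b_def using q_nz by auto
  have "q^r * (a + inverse a) = q^r * (b + inverse b)" using assms(3) by (simp add: lam_def a_def b_def)
  hence e: "a + inverse a = b + inverse b" using q_nz by simp
  have "(a - b) * (a*b - 1) = a*b*((a + inverse a) - (b + inverse b))" using a0 b0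
    by (simp add: field_simps)
  hence "(a - b) * (a*b - 1) = 0" using e by simp
  hence "a = b \<or> a * b = 1" by simp
  thus ?thesis
  proof
    assume "a = b" thus ?thesis using q_pow_eq[of j k] assms(1,2) nh by (simp add: a_def b_def)
  next
    assume "a * b = 1"
    hence "q^(j+k) = 1" by (simp add: a_def b_def power_add)
    hence "\<not> (0 < j + k \<and> j + k < n)" using prim by blast
    thus ?thesis using assms(1,2) nh by simp
  qed
qed

definition lin :: "nat \<Rightarrow> nat \<Rightarrow> complex poly" where "lin j r = [:-lam q j r, 1:]"

lemma poly_lin[simp]: "poly (lin j r) x = x - lam q j r" by (simp add: lin_def)
lemma lin_nz[simp]: "lin j r \<noteq> 0" by (simp add: lin_def)
lemma degree_lin[simp]: "degree (lin j r) = 1" by (simp add: lin_def)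

lemma Tp_lin: "Tp r = (\<Prod>j\<in>{1..h}. lin j r)" by (simp add: Tp_def lin_def)

lemma f_fact': "fx n (q^(2*r)) = lin 0 r * (Tp r)^2" by (simp add: f_fact lin_def)

definition Tm :: "nat \<Rightarrow> nat \<Rightarrow> complex poly" where
  "Tm j r = (\<Prod>k\<in>{1..h}-{j}. lin k r)"

definition Fl :: "nat \<Rightarrow> nat \<Rightarrow> complex poly" where
  "Fl j r = (if j = 0 then (Tp r)^2 else lin 0 r * Tp r * Tm j r)"

definition Gl :: "nat \<Rightarrow> nat \<Rightarrow> complex poly" where
  "Gl j r = lin 0 r * (Tm j r)^2"

abbreviation "fr r \<equiv> fx n (q^(2*r))"

lemma Tp_split: "j \<in> {1..h} \<Longrightarrow> Tp r = lin j r * Tm j r"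
  unfolding Tp_lin Tm_def by (rule prod.remove) auto

lemma fr_F: "j \<in> {0..h} \<Longrightarrow> fr r = lin j r * Fl j r"
proof -
  assume j: "j \<in> {0..h}"
  show ?thesis
  proof (cases "j = 0")
    case True thus ?thesis unfolding f_fact' by (simp add: Fl_def)
  next
    case False
    hence "Tp r = lin j r * Tm j r" using j by (intro Tp_split) auto
    thus ?thesis using False unfolding f_fact' by (simp add: Fl_def power2_eq_square mult_ac)
  qed
qed

lemma F_G: "j \<in> {1..h} \<Longrightarrow> Fl j r = lin j r * Gl j r"
proof -
  assume j: "j \<in> {1..h}"
  hence "Tp r = lin j r * Tm j r" by (rule Tp_split)
  thus ?thesis using j by (simp add: Fl_def Gl_def power2_eq_square mult_ac)
qed

lemma fr_G: "j \<in> {1..h} \<Longrightarrow> fr r = lin j r ^ 2 * Gl j r"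
  using fr_F[of j r] F_G[of j r] by (simp add: power2_eq_square mult_ac)

lemma Tm_nz: "Tm j r \<noteq> 0" by (simp add: Tm_def)
lemma Tp_nz: "Tp r \<noteq> 0" by (simp add: Tp_lin)

lemma fr_nz: "fr r \<noteq> 0" unfolding f_fact' by (simp add: Tp_nz)

lemma deg_Tp: "degree (Tp r) = h"
  unfolding Tp_lin by (subst degree_prod_eq_sum_degree) auto

lemma deg_fr: "degree (fr r) = n"
  using Tp_nz[of r] unfolding f_fact' by (simp add: degree_mult_eq deg_Tp degree_power_eq nh)

lemma deg_Fl: "j \<in> {0..h} \<Longrightarrow> degree (Fl j r) \<le> n - 1"
proof -
  assume j: "j \<in> {0..h}"
  have "Fl j r \<noteq> 0" using fr_F[OF j, of r] fr_nz[of r] by auto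
  hence "degree (fr r) = degree (lin j r) + degree (Fl j r)"
    using fr_F[OF j] by (simp add: degree_mult_eq)
  thus ?thesis using deg_fr by simp
qed

lemma deg_Gl: "j \<in> {1..h} \<Longrightarrow> degree (Gl j r) \<le> n - 1"
proof -
  assume j: "j \<in> {1..h}"
  have "Gl j r \<noteq> 0" using fr_G[OF j, of r] fr_nz[of r] by auto
  hence "degree (fr r) = degree (lin j r ^ 2) + degree (Gl j r)"
    using fr_G[OF j] by (simp add: degree_mult_eq)
  thus ?thesis using deg_fr by (simp add: degree_power_eq)
qed

lemma poly_Tp: "k \<in> {1..h} \<Longrightarrow> poly (Tp r) (lam q k r) = 0"
  using Tp_split[of k r] by simp

lemma poly_Tp_gen: "poly (Tp r) x = (\<Prod>j\<in>{1..h}. x - lam q j r)"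
  by (simp add: Tp_lin poly_prod)

lemma poly_Tp0: "poly (Tp r) (lam q 0 r) = (\<Prod>j\<in>{1..h}. lam q 0 r - lam q j r)"
  by (rule poly_Tp_gen)

lemma poly_Tp0_nz: "poly (Tp r) (lam q 0 r) \<noteq> 0"
proof -
  have "\<forall>j\<in>{1..h}. lam q 0 r - lam q j r \<noteq> 0"
  proof
    fix j assume j: "j \<in> {1..h}"
    show "lam q 0 r - lam q j r \<noteq> 0"
    proof
      assume "lam q 0 r - lam q j r = 0"
      hence "0 = j" using lam_inj[of 0 j r] j by simp
      thus False using j by simp
    qed
  qed
  thus ?thesis unfolding poly_Tp0 by (subst prod_zero_iff) auto
qed

lemma poly_Tm: "k \<in> {1..h} - {j} \<Longrightarrow> poly (Tm j r) (lam q k r) = 0"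
  unfolding Tm_def poly_prod by (rule prod_zero) auto

lemma poly_Tm_same: "j \<in> {1..h} \<Longrightarrow> poly (Tm j r) (lam q j r) = (\<Prod>k\<in>{1..h}-{j}. lam q j r - lam q k r)"
  by (simp add: Tm_def poly_prod)

lemma poly_Tm_same_nz: assumes j: "j \<in> {1..h}" shows "poly (Tm j r) (lam q j r) \<noteq> 0"
proof -
  have "\<forall>k\<in>{1..h} - {j}. lam q j r - lam q k r \<noteq> 0"
  proof
    fix k assume k: "k \<in> {1..h} - {j}"
    show "lam q j r - lam q k r \<noteq> 0"
    proof
      assume "lam q j r - lam q k r = 0"
      hence "j = k" using lam_inj[of j k r] j k by simp
      thus False using k by simp
    qed
  qed
  thus ?thesis unfolding poly_Tm_same[OF j] by (subst prod_zero_iff) auto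
qed

lemma xi_eq: "xi n q r = (poly (Tp r) (lam q 0 r))^2"
  by (simp add: xi_def hh_eq poly_Tp_gen lam0 prod_power_distrib[symmetric])

lemma xi_nz: "xi n q r \<noteq> 0" using poly_Tp0_nz by (simp add: xi_eq)

lemma theta_eq: "theta n q j r = (lam q j r - lam q 0 r) * (poly (Tm j r) (lam q j r))^2"
  by (simp add: theta_def hh_eq Tm_def poly_prod prod_power_distrib[symmetric])

lemma theta_nz: "j \<in> {1..h} \<Longrightarrow> theta n q j r \<noteq> 0"
  using poly_Tm_same_nz[of j r] lam_inj[of j 0 r] by (auto simp: theta_eq)

lemma poly_Fl: assumes "j \<in> {0..h}" "k \<in> {0..h}"
  shows "poly (Fl j r) (lam q k r) = (if j = 0 \<and> k = 0 then xi n q r else 0)"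
proof (cases "j = 0")
  case True
  thus ?thesis using assms poly_Tp[of k r] by (auto simp: Fl_def xi_eq)
next
  case False
  thus ?thesis using assms poly_Tp[of k r] by (cases "k = 0") (auto simp: Fl_def)
qed

lemma poly_Gl: assumes "j \<in> {1..h}" "k \<in> {0..h}"
  shows "poly (Gl j r) (lam q k r) = (if k = j then theta n q j r else 0)"
proof (cases "k = 0")
  case True thus ?thesis using assms by (auto simp: Gl_def)
next
  case False
  thus ?thesis using assms poly_Tm[of k j r] by (auto simp: Gl_def theta_eq)
qed

lemma Tp_reindex: "Tp r = (\<Prod>a\<in>(\<lambda>j. lam q j r) ` {1..h}. [:-a,1:])"
proof -
  have "inj_on (\<lambda>j. lam q j r) {1..h}" using lam_inj[of _ _ r] by (auto simp: inj_on_def)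
  thus ?thesis unfolding Tp_def by (simp add: prod.reindex)
qed

lemma S_reindex: "lin 0 r * Tp r = (\<Prod>a\<in>(\<lambda>j. lam q j r) ` {0..h}. [:-a,1:])"
proof -
  have inj: "inj_on (\<lambda>j. lam q j r) {0..h}" using lam_inj[of _ _ r] by (auto simp: inj_on_def)
  have "{0..h} = insert 0 {1..h}" by auto
  hence "(\<Prod>j\<in>{0..h}. lin j r) = lin 0 r * Tp r" by (simp add: Tp_lin)
  thus ?thesis by (simp add: prod.reindex[OF inj] lin_def)
qed

lemma vanish_dvd: "(\<forall>k\<in>{0..h}. poly p (lam q k r) = 0) \<Longrightarrow> lin 0 r * Tp r dvd p"
  unfolding S_reindex by (rule prod_roots_dvd) auto

lemma vanish_dvd_Tp: "(\<forall>k\<in>{1..h}. poly p (lam q k r) = 0) \<Longrightarrow> Tp r dvd p"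
  unfolding Tp_reindex by (rule prod_roots_dvd) auto

lemma Fl_S: "j \<in> {1..h} \<Longrightarrow> Fl j r = (lin 0 r * Tp r) * Tm j r"
  by (simp add: Fl_def)

lemma fr_S: "fr r = (lin 0 r * Tp r) * Tp r"
  unfolding f_fact' by (simp add: power2_eq_square mult_ac)

lemma Lag: assumes "lin 0 r * Tp r dvd p"
  shows "\<exists>a. fr r dvd p - (\<Sum>j\<in>{1..h}. smult (a j) (Fl j r))"
proof -
  let ?S = "lin 0 r * Tp r"
  obtain Q where Q: "p = ?S * Q" using assms by (auto simp: dvd_def)
  define a where "a j = poly Q (lam q j r) / poly (Tm j r) (lam q j r)" for j
  let ?R = "Q - (\<Sum>j\<in>{1..h}. smult (a j) (Tm j r))"
  have "\<forall>k\<in>{1..h}. poly ?R (lam q k r) = 0"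
  proof
    fix k assume k: "k \<in> {1..h}"
    have "(\<Sum>j\<in>{1..h}. a j * poly (Tm j r) (lam q k r)) = (\<Sum>j\<in>{1..h}. if j = k then a k * poly (Tm k r) (lam q k r) else 0)"
      by (rule sum.cong[OF refl]) (use poly_Tm[of k _ r] k in auto)
    also have "\<dots> = a k * poly (Tm k r) (lam q k r)" using k by simp
    also have "\<dots> = poly Q (lam q k r)" using poly_Tm_same_nz[OF k] by (simp add: a_def)
    finally show "poly ?R (lam q k r) = 0" by (simp add: poly_sum)
  qed
  hence "Tp r dvd ?R" by (rule vanish_dvd_Tp)
  hence d: "?S * Tp r dvd ?S * ?R" by (rule mult_dvd_mono[OF dvd_refl])
  have e: "?S * ?R = p - (\<Sum>j\<in>{1..h}. smult (a j) (Fl j r))"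
    by (simp add: Q algebra_simps sum_distrib_left Fl_S mult_smult_right)
  show ?thesis apply (rule exI[of _ a]) unfolding fr_S e[symmetric] by (rule d)
qed

lemma sum0h: "(\<Sum>j\<in>{0..h}. f j) = f 0 + (\<Sum>j\<in>{1..h}. f j)"
proof -
  have "{0..h} = insert 0 {1..h}" by auto
  thus ?thesis by simp
qed

definition comb :: "(nat \<Rightarrow> complex) \<Rightarrow> (nat \<Rightarrow> complex) \<Rightarrow> nat \<Rightarrow> complex poly" where
  "comb a b r = (\<Sum>j\<in>{0..h}. smult (a j) (Fl j r)) + (\<Sum>j\<in>{1..h}. smult (b j) (Gl j r))"

lemma poly_comb: assumes "k \<in> {0..h}"
  shows "poly (comb a b r) (lam q k r) = (if k = 0 then a 0 * xi n q r else b k * theta n q k r)"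
proof -
  have s1: "(\<Sum>j\<in>{0..h}. a j * poly (Fl j r) (lam q k r)) = (if k = 0 then a 0 * xi n q r else 0)"
    using assms by (simp add: poly_Fl if_distrib sum0h cong: if_cong)
  have s2: "(\<Sum>j\<in>{1..h}. b j * poly (Gl j r) (lam q k r)) = (if k = 0 then 0 else b k * theta n q k r)"
  proof -
    have "(\<Sum>j\<in>{1..h}. b j * poly (Gl j r) (lam q k r)) = (\<Sum>j\<in>{1..h}. if j = k then b k * theta n q k r else 0)"
      by (rule sum.cong[OF refl]) (use assms in \<open>auto simp: poly_Gl\<close>)
    also have "\<dots> = (if k = 0 then 0 else b k * theta n q k r)" using assms by auto
    finally show ?thesis .
  qed
  show ?thesis unfolding comb_def using s1 s2 by (simp add: poly_sum)
qed

lemma span: "\<exists>a b. fr r dvd p - comb a b r"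
proof -
  define a0 where "a0 = poly p (lam q 0 r) / xi n q r"
  define b where "b k = poly p (lam q k r) / theta n q k r" for k
  let ?p1 = "p - comb (\<lambda>j. if j = 0 then a0 else 0) b r"
  have "\<forall>k\<in>{0..h}. poly ?p1 (lam q k r) = 0"
    using xi_nz theta_nz by (auto simp: poly_comb a0_def b_def)
  hence "lin 0 r * Tp r dvd ?p1" by (rule vanish_dvd)
  then obtain a' where a': "fr r dvd ?p1 - (\<Sum>j\<in>{1..h}. smult (a' j) (Fl j r))" using Lag by blast
  have eq: "?p1 - (\<Sum>j\<in>{1..h}. smult (a' j) (Fl j r)) = p - comb (\<lambda>j. if j = 0 then a0 else a' j) b r"
    by (simp add: comb_def sum0h)
  show ?thesis by (rule exI[of _ "\<lambda>j. if j = 0 then a0 else a' j"], rule exI[of _ b]) (rule a'[unfolded eq])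
qed

lemma indep: assumes "fr r dvd comb a b r"
  shows "(\<forall>j\<in>{0..h}. a j = 0) \<and> (\<forall>j\<in>{1..h}. b j = 0)"
proof -
  have dc: "degree (comb a b r) \<le> n - 1"
    unfolding comb_def
    by (intro degree_add_le degree_sum_le order.trans[OF degree_smult_le] deg_Fl deg_Gl) auto
  have c0: "comb a b r = 0"
  proof (rule ccontr)
    assume "comb a b r \<noteq> 0"
    hence "degree (fr r) \<le> degree (comb a b r)" using dvd_imp_degree_le[OF assms] by blast
    thus False using dc deg_fr n_pos by simp
  qed
  have a0: "a 0 = 0" using poly_comb[of 0 a b r] c0 xi_nz by simp
  have b0: "\<forall>j\<in>{1..h}. b j = 0"
  proof
    fix j assume j: "j \<in> {1..h}"
    show "b j = 0" using poly_comb[of j a b r] c0 theta_nz[OF j] j by simp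
  qed
  have "comb a b r = (lin 0 r * Tp r) * (\<Sum>j\<in>{1..h}. smult (a j) (Tm j r))"
    using a0 b0 by (simp add: comb_def sum0h Fl_S sum_distrib_left mult_smult_right)
  hence z: "(\<Sum>j\<in>{1..h}. smult (a j) (Tm j r)) = 0" using c0 Tp_nz by simp
  have "\<forall>k\<in>{1..h}. a k = 0"
  proof
    fix k assume k: "k \<in> {1..h}"
    have "0 = poly (\<Sum>j\<in>{1..h}. smult (a j) (Tm j r)) (lam q k r)" using z by simp
    also have "\<dots> = (\<Sum>j\<in>{1..h}. if j = k then a k * poly (Tm k r) (lam q k r) else 0)"
      unfolding poly_sum by (rule sum.cong[OF refl]) (use poly_Tm[of k _ r] k in auto)
    also have "\<dots> = a k * poly (Tm k r) (lam q k r)" using k by simp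
    finally show "a k = 0" using poly_Tm_same_nz[OF k] by simp
  qed
  hence "\<forall>j\<in>{0..h}. a j = 0" using a0 by (auto simp: atLeastAtMost_iff Suc_le_eq)
  thus ?thesis using b0 by blast
qed

end

lemma poly_eqI_fun: fixes p q :: "complex poly" assumes "\<And>x. poly p x = poly q x" shows "p = q"
proof -
  have "poly p = poly q" by (rule ext) (rule assms)
  thus ?thesis by (simp only: poly_eq_poly_eq_iff)
qed

lemma root_dvd: "poly (p::complex poly) c = 0 \<Longrightarrow> [:-c,1:] dvd p"
  by (simp only: poly_eq_0_iff_dvd)

lemma prod_expand:
  fixes G1 F1 G2 F2 :: "complex poly"
  shows "smult a (G1 - smult b F1) * smult c (G2 - smult d F2)
     = smult (a*c) (G1*G2) - smult (a*c*d) (G1*F2) - smult (a*b*c) (F1*G2) + smult (a*b*c*d) (F1*F2)"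
  by (rule poly_eqI_fun) (simp add: algebra_simps)

context DD begin

lemma TmTm: assumes "j \<in> {1..h}" "k \<in> {1..h}" "j \<noteq> k"
  shows "\<exists>W. Tm j r * Tm k r = Tp r * W"
proof -
  have "Tm k r = lin j r * (\<Prod>i\<in>({1..h}-{k})-{j}. lin i r)"
    unfolding Tm_def by (rule prod.remove) (use assms in auto)
  hence "Tm j r * Tm k r = (lin j r * Tm j r) * (\<Prod>i\<in>({1..h}-{k})-{j}. lin i r)"
    by (simp add: mult_ac)
  thus ?thesis using Tp_split[OF assms(1), of r] by auto
qed

lemma Fl0: "Fl 0 r = Tp r * Tp r" by (simp add: Fl_def power2_eq_square)

lemma P_FF: assumes j: "j \<in> {1..h}" and k: "k \<in> {1..h}" shows "fr r dvd Fl j r * Fl k r"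
proof -
  have "Fl j r * Fl k r = fr r * (lin 0 r * Tm j r * Tm k r)"
    unfolding fr_S Fl_S[OF j] Fl_S[OF k] by (simp only: mult_ac)
  thus ?thesis by simp
qed

lemma P_F0F: assumes k: "k \<in> {1..h}" shows "fr r dvd Fl 0 r * Fl k r"
proof -
  have "Fl 0 r * Fl k r = fr r * (Tp r * Tm k r)"
    unfolding fr_S Fl_S[OF k] by (simp only: Fl0 power2_eq_square mult_ac)
  thus ?thesis by simp
qed

lemma P_F0G: "fr r dvd Fl 0 r * Gl k r"
proof -
  have "Fl 0 r * Gl k r = fr r * (Tm k r * Tm k r)"
    unfolding fr_S by (simp only: Fl0 Gl_def power2_eq_square mult_ac)
  thus ?thesis by simp
qed

lemma P_FG: assumes "j \<in> {1..h}" "k \<in> {1..h}" "j \<noteq> k" shows "fr r dvd Fl j r * Gl k r"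
proof -
  obtain W where W: "Tm j r * Tm k r = Tp r * W" using TmTm[OF assms] by blast
  have "Fl j r * Gl k r = lin 0 r * lin 0 r * Tp r * Tm k r * (Tm j r * Tm k r)"
    unfolding Fl_S[OF assms(1)] Gl_def by (simp only: power2_eq_square mult_ac)
  also have "\<dots> = (lin 0 r * Tp r) * Tp r * (lin 0 r * Tm k r * W)"
    unfolding W by (simp only: mult_ac)
  finally show ?thesis unfolding fr_S by simp
qed

lemma P_GG: assumes "j \<in> {1..h}" "k \<in> {1..h}" "j \<noteq> k" shows "fr r dvd Gl j r * Gl k r"
proof -
  obtain W where W: "Tm j r * Tm k r = Tp r * W" using TmTm[OF assms] by blast
  have "Gl j r * Gl k r = lin 0 r * lin 0 r * (Tm j r * Tm k r) * (Tm j r * Tm k r)"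
    unfolding Gl_def by (simp only: power2_eq_square mult_ac)
  also have "\<dots> = (lin 0 r * Tp r) * Tp r * (lin 0 r * W * W)"
    unfolding W by (simp only: mult_ac)
  finally show ?thesis unfolding fr_S by simp
qed

lemma smult_const: "smult c p = [:c:] * p" by simp

lemma I0: "fr r dvd Fl 0 r * Fl 0 r - smult (xi n q r) (Fl 0 r)"
proof -
  have "poly (Fl 0 r - [:xi n q r:]) (lam q 0 r) = 0" by (simp add: poly_Fl)
  hence "lin 0 r dvd Fl 0 r - [:xi n q r:]" unfolding lin_def by (rule root_dvd)
  then obtain c where c: "Fl 0 r - [:xi n q r:] = lin 0 r * c" by (auto simp: dvd_def)
  have "Fl 0 r * Fl 0 r - smult (xi n q r) (Fl 0 r) = Fl 0 r * (Fl 0 r - [:xi n q r:])"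
    by (simp add: algebra_simps)
  also have "\<dots> = fr r * c" unfolding c f_fact' by (simp add: Fl_def mult_ac)
  finally show ?thesis by simp
qed

lemma IG: assumes j: "j \<in> {1..h}"
  shows "\<exists>v. fr r dvd Gl j r * Gl j r - (smult (theta n q j r) (Gl j r) + smult v (Fl j r))"
proof -
  let ?G = "Gl j r" and ?t = "theta n q j r"
  have "poly (?G - [:?t:]) (lam q j r) = 0" using j by (simp add: poly_Gl)
  hence "lin j r dvd ?G - [:?t:]" unfolding lin_def by (rule root_dvd)
  then obtain p1 where p1: "?G - [:?t:] = lin j r * p1" by (auto simp: dvd_def)
  define v where "v = poly p1 (lam q j r)"
  have "poly (p1 - [:v:]) (lam q j r) = 0" by (simp add: v_def)
  hence "lin j r dvd p1 - [:v:]" unfolding lin_def by (rule root_dvd)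
  then obtain p2 where p2: "p1 - [:v:] = lin j r * p2" by (auto simp: dvd_def)
  have "?G * ?G - (smult ?t ?G + smult v (Fl j r)) = ?G * ((?G - [:?t:]) - [:v:] * lin j r)"
    unfolding F_G[OF j] by (simp add: algebra_simps)
  also have "\<dots> = ?G * (lin j r * (p1 - [:v:]))" unfolding p1 by (simp add: algebra_simps)
  also have "\<dots> = fr r * p2" unfolding p2 fr_G[OF j] by (simp add: power2_eq_square mult_ac)
  finally show ?thesis by (intro exI[of _ v]) simp
qed

lemma IGp: assumes j: "j \<in> {1..h}"
  and hv: "fr r dvd Gl j r * Gl j r - (smult (theta n q j r) (Gl j r) + smult v (Fl j r))"
  shows "fr r dvd smult (inverse (theta n q j r)) (Gl j r - smult (v / theta n q j r) (Fl j r))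
     * smult (inverse (theta n q j r)) (Gl j r - smult (v / theta n q j r) (Fl j r))
     - smult (inverse (theta n q j r)) (Gl j r - smult (v / theta n q j r) (Fl j r))"
proof -
  let ?G = "Gl j r" and ?F = "Fl j r" and ?t = "theta n q j r"
  let ?a = "inverse ?t" and ?b = "v / ?t"
  have t0: "?t \<noteq> 0" using theta_nz[OF j] .
  let ?E1 = "?G * ?G - (smult ?t ?G + smult v ?F)"
  let ?E2 = "?G * ?F - smult ?t ?F"
  let ?E3 = "?F * ?F"
  have id: "smult ?a (?G - smult ?b ?F) * smult ?a (?G - smult ?b ?F) - smult ?a (?G - smult ?b ?F)
     = smult (?a^2) ?E1 - smult (2 * ?a^2 * ?b) ?E2 + smult (?a^2 * ?b^2) ?E3"
    by (rule poly_eqI_fun) (use t0 in \<open>simp add: field_simps power2_eq_square\<close>)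
  have fF: "fr r = lin j r * Fl j r" using j by (intro fr_F) auto
  have e2: "?E2 = lin j r * ?E1 + smult v (fr r)"
    unfolding fF F_G[OF j] by (simp add: algebra_simps)
  have e3: "?E3 = fr r * ?G"
    unfolding fF F_G[OF j] by (simp only: mult_ac)
  have d2: "fr r dvd ?E2" unfolding e2 by (rule dvd_add[OF dvd_mult[OF hv] dvd_smult[OF dvd_refl]])
  have d3: "fr r dvd ?E3" unfolding e3 by simp
  show ?thesis unfolding id
    by (rule dvd_add[OF dvd_diff[OF dvd_smult[OF hv] dvd_smult[OF d2]] dvd_smult[OF d3]])
qed

lemma EF: "j \<in> {0..h} \<Longrightarrow> Fl j r * [:0,1:] - smult (lam q j r) (Fl j r) = fr r"
  by (subst fr_F[of j r]) (auto intro!: poly_eqI_fun simp: algebra_simps)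

lemma EG: "j \<in> {1..h} \<Longrightarrow> Gl j r * [:0,1:] - smult (lam q j r) (Gl j r) - Fl j r = 0"
  by (subst F_G[of j r]) (auto intro!: poly_eqI_fun simp: algebra_simps)

definition Eidl :: "nat \<Rightarrow> nat \<Rightarrow> complex poly" where
  "Eidl j r = (if j = 0 then smult (inverse (xi n q r)) (Fl 0 r)
      else smult (inverse (theta n q j r)) (Gl j r - smult (nu n q j r / theta n q j r) (Fl j r)))"

lemma poly_Eidl: assumes "j \<in> {0..h}" "k \<in> {0..h}"
  shows "poly (Eidl j r) (lam q k r) = (if j = k then 1 else 0)"
proof (cases "j = 0")
  case True thus ?thesis using assms xi_nz[of r] by (auto simp: Eidl_def poly_Fl)
next
  case False
  hence j: "j \<in> {1..h}" using assms by auto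
  thus ?thesis using assms False theta_nz[OF j, of r] by (auto simp: Eidl_def poly_Fl poly_Gl)
qed

lemma orth_loc: assumes "j \<in> {0..h}" "k \<in> {0..h}" "j \<noteq> k"
  shows "fr r dvd Eidl j r * Eidl k r"
proof -
  have gen: "fr r dvd Eidl j r * Eidl k r" if jk: "j \<in> {0..h}" "k \<in> {1..h}" "j \<noteq> k" for j k
  proof (cases "j = 0")
    case True
    have "Eidl j r * Eidl k r = smult (inverse (xi n q r)) (Fl 0 r - smult 0 0) *
        smult (inverse (theta n q k r)) (Gl k r - smult (nu n q k r / theta n q k r) (Fl k r))"
      using True jk by (simp add: Eidl_def)
    also have "\<dots> = smult (inverse (xi n q r) * inverse (theta n q k r)) (Fl 0 r * Gl k r)
         - smult (inverse (xi n q r) * inverse (theta n q k r) * (nu n q k r / theta n q k r)) (Fl 0 r * Fl k r)"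
      by (simp only: prod_expand) simp
    finally show ?thesis using P_F0G P_F0F[OF jk(2)] by (simp add: dvd_diff dvd_smult)
  next
    case False
    hence j1: "j \<in> {1..h}" using jk by auto
    have eq: "Eidl j r * Eidl k r = smult (inverse (theta n q j r)) (Gl j r - smult (nu n q j r / theta n q j r) (Fl j r)) *
        smult (inverse (theta n q k r)) (Gl k r - smult (nu n q k r / theta n q k r) (Fl k r))"
      using False jk by (simp add: Eidl_def)
    have d2: "fr r dvd Gl j r * Fl k r" using P_FG[OF jk(2) j1 jk(3)[symmetric], of r] by (simp add: mult.commute)
    show ?thesis unfolding eq prod_expand
      by (rule dvd_add[OF dvd_diff[OF dvd_diff[OF dvd_smult[OF P_GG[OF j1 jk(2,3)]] dvd_smult[OF d2]]
          dvd_smult[OF P_FG[OF j1 jk(2,3)]]] dvd_smult[OF P_FF[OF j1 jk(2)]]])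
  qed
  show ?thesis
  proof (cases "k = 0")
    case False thus ?thesis using gen assms by auto
  next
    case True
    hence "j \<in> {1..h}" using assms by auto
    thus ?thesis using gen[of k j] assms by (simp add: mult.commute)
  qed
qed

end

context DD begin

definition loc :: "nat \<Rightarrow> complex poly poly \<Rightarrow> complex poly" where
  "loc r P = ev (q^(2*r)) P"

lemma loc_simps[simp]:
  "loc r (P + Q) = loc r P + loc r Q" "loc r (P - Q) = loc r P - loc r Q"
  "loc r (P * Q) = loc r P * loc r Q" "loc r (sc c P) = smult c (loc r P)"
  "loc r 0 = 0" "loc r 1 = 1" "loc r Xv = [:0,1:]"
  by (simp_all add: loc_def)

lemma loc_sum: "loc r (\<Sum>i\<in>A. f i) = (\<Sum>i\<in>A. loc r (f i))"
  by (simp add: loc_def)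

lemma crit': "congI n P Q \<longleftrightarrow> (\<forall>r<n. fr r dvd loc r P - loc r Q)"
  unfolding crit loc_def ..

lemma cong0: "congI n P 0 \<longleftrightarrow> (\<forall>r<n. fr r dvd loc r P)"
  unfolding crit' by simp

lemma div_F: "j \<in> {0..h} \<Longrightarrow> fr r div [:-lam q j r,1:] = Fl j r"
  using fr_F[of j r] by (simp add: lin_def[symmetric])

lemma div_G: "j \<in> {1..h} \<Longrightarrow> fr r div [:-lam q j r,1:]^2 = Gl j r"
proof -
  assume j: "j \<in> {1..h}"
  have "lin j r ^ 2 \<noteq> 0" by simp
  thus ?thesis using fr_G[OF j, of r] by (simp add: lin_def[symmetric])
qed

lemma loc_xE: "r < n \<Longrightarrow> r' < n \<Longrightarrow> loc r' (xpoly p * Eu n q (2*r)) = (if r' = r then p else 0)"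
  by (simp add: loc_def ev_Eu)

lemma loc_Fc: assumes "j \<in> {0..h}" "r < n" "r' < n" shows "loc r' (Fc n q j r) = (if r' = r then Fl j r else 0)"
  unfolding Fc_def div_F[OF assms(1)] by (rule loc_xE[OF assms(2,3)])

lemma loc_Gc: assumes "j \<in> {1..h}" "r < n" "r' < n" shows "loc r' (Gc n q j r) = (if r' = r then Gl j r else 0)"
  unfolding Gc_def div_G[OF assms(1)] by (rule loc_xE[OF assms(2,3)])

lemma loc_Eid: assumes "j \<in> {0..h}" "r < n" "r' < n"
  shows "loc r' (Eid n q j r) = (if r' = r then Eidl j r else 0)"
proof (cases "j = 0")
  case True thus ?thesis using assms by (simp add: Eid_def Eidl_def loc_Fc)
next
  case False
  hence j: "j \<in> {1..h}" using assms by auto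
  thus ?thesis using False assms by (simp add: Eid_def Eidl_def Gp_def loc_Fc loc_Gc)
qed

lemma loc_sum_delta:
  assumes r': "r' < n" and fin: "finite J"
    and X: "\<And>j r. j \<in> J \<Longrightarrow> r < n \<Longrightarrow> loc r' (X j r) = (if r' = r then Y j else 0)"
  shows "loc r' (\<Sum>(j,r)\<in>J\<times>{0..<n}. sc (c (j,r)) (X j r)) = (\<Sum>j\<in>J. smult (c (j,r')) (Y j))"
proof -
  have "loc r' (\<Sum>(j,r)\<in>J\<times>{0..<n}. sc (c (j,r)) (X j r)) = (\<Sum>(j,r)\<in>J\<times>{0..<n}. smult (c (j,r)) (loc r' (X j r)))"
    unfolding loc_sum by (rule sum.cong[OF refl]) (auto simp: split_beta)
  also have "\<dots> = (\<Sum>j\<in>J. \<Sum>r\<in>{0..<n}. smult (c (j,r)) (loc r' (X j r)))"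
    by (rule sum.cartesian_product[symmetric])
  also have "\<dots> = (\<Sum>j\<in>J. \<Sum>r\<in>{0..<n}. if r' = r then smult (c (j,r')) (Y j) else 0)"
    by (intro sum.cong refl) (auto simp: X)
  also have "\<dots> = (\<Sum>j\<in>J. smult (c (j,r')) (Y j))" using r' by simp
  finally show ?thesis .
qed

definition MI :: "nat \<Rightarrow> complex \<Rightarrow> complex poly poly set" where
  "MI r \<mu> = {P. poly (loc r P) \<mu> = 0}"

lemma MI_ideal: assumes "r < n" "poly (fr r) \<mu> = 0" shows "A_ideal n (MI r \<mu>)"
  unfolding A_ideal_def MI_def
proof (intro conjI ballI allI impI; simp)
  fix P Q assume P: "poly (loc r P) \<mu> = 0" and c: "congI n P Q"
  have "fr r dvd loc r P - loc r Q" using c assms(1) by (simp add: crit')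
  then obtain k where "loc r P - loc r Q = fr r * k" by (auto simp: dvd_def)
  hence "poly (loc r P) \<mu> - poly (loc r Q) \<mu> = poly (fr r) \<mu> * poly k \<mu>"
    by (metis poly_diff poly_mult)
  thus "poly (loc r Q) \<mu> = 0" using P assms(2) by simp
qed

lemma gpoly_one: "gpoly [:1:] = 1" by (simp add: gpoly_def one_pCons)

lemma MI_max: assumes "r < n" "poly (fr r) \<mu> = 0" shows "A_maximal n (MI r \<mu>)"
  unfolding A_maximal_def
proof (intro conjI allI impI)
  show "A_ideal n (MI r \<mu>)" by (rule MI_ideal[OF assms])
  show "1 \<notin> MI r \<mu>" by (simp add: MI_def)
  fix T assume T: "A_ideal n T \<and> MI r \<mu> \<subseteq> T"
  show "T = MI r \<mu> \<or> 1 \<in> T"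
  proof (cases "T = MI r \<mu>")
    case True thus ?thesis by simp
  next
    case False
    then obtain P where P: "P \<in> T" "P \<notin> MI r \<mu>" using T by blast
    let ?c = "poly (loc r P) \<mu>"
    have c0: "?c \<noteq> 0" using P by (simp add: MI_def)
    have K: "P - sc ?c 1 \<in> T" using T by (auto simp: MI_def A_ideal_def)
    have "P + (-1) * (P - sc ?c 1) \<in> T" using T P(1) K unfolding A_ideal_def by blast
    hence "sc ?c 1 \<in> T" by simp
    hence "gpoly [:inverse ?c:] * sc ?c 1 \<in> T" using T unfolding A_ideal_def by blast
    moreover have "gpoly [:inverse ?c:] * sc ?c 1 = 1"
      using c0 by (simp add: sc_mult gpoly_mult gpoly_one)
    ultimately show ?thesis by simp
  qed
qed

lemma jac_vanish: assumes "P \<in> jac n" "r < n" "k \<in> {0..h}" shows "poly (loc r P) (lam q k r) = 0"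
proof -
  have "poly (fr r) (lam q k r) = 0" using fr_F[OF assms(3), of r] by (simp add: lin_def)
  hence "A_maximal n (MI r (lam q k r))" by (rule MI_max[OF assms(2)])
  thus ?thesis using assms(1) by (auto simp: jac_def MI_def)
qed

lemma maxI: "A_maximal n S \<Longrightarrow> A_ideal n S" by (simp add: A_maximal_def)

lemma ideal_sat: "A_ideal n S \<Longrightarrow> P \<in> S \<Longrightarrow> congI n P Q \<Longrightarrow> Q \<in> S"
  unfolding A_ideal_def by blast
lemma ideal_add: "A_ideal n S \<Longrightarrow> P \<in> S \<Longrightarrow> Q \<in> S \<Longrightarrow> P + Q \<in> S"
  unfolding A_ideal_def by blast
lemma ideal_mult: "A_ideal n S \<Longrightarrow> P \<in> S \<Longrightarrow> R * P \<in> S"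
  unfolding A_ideal_def by blast
lemma ideal_0: "A_ideal n S \<Longrightarrow> 0 \<in> S"
  unfolding A_ideal_def by blast

lemma jac_cong: "P \<in> jac n \<Longrightarrow> congI n P Q \<Longrightarrow> Q \<in> jac n"
  unfolding jac_def using maxI ideal_sat by blast

lemma jac_add: "P \<in> jac n \<Longrightarrow> Q \<in> jac n \<Longrightarrow> P + Q \<in> jac n"
  unfolding jac_def using maxI ideal_add by blast

lemma jac_mult: "P \<in> jac n \<Longrightarrow> R * P \<in> jac n"
  unfolding jac_def using maxI ideal_mult by blast

lemma jac_0: "0 \<in> jac n"
  unfolding jac_def using maxI ideal_0 by blast

lemma jac_sc: "P \<in> jac n \<Longrightarrow> sc c P \<in> jac n"
  unfolding sc_mult by (rule jac_mult)

lemma jac_sum: "(\<And>i. i \<in> A \<Longrightarrow> f i \<in> jac n) \<Longrightarrow> (\<Sum>i\<in>A. f i) \<in> jac n"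
  by (induction A rule: infinite_finite_induct) (auto intro: jac_0 jac_add)

lemma congI_refl: "congI n P P" by (simp add: congI_inI inI_0)
lemma congI_sym: "congI n P Q \<Longrightarrow> congI n Q P"
  unfolding congI_inI using inI_mult[of "P - Q" "-1"] by simp
lemma congI_trans: "congI n P Q \<Longrightarrow> congI n Q R \<Longrightarrow> congI n P R"
  unfolding congI_inI using inI_add[of "P - Q" "Q - R"] by simp

lemma sq_zero_jac: assumes sq: "congI n (F * F) 0" shows "F \<in> jac n"
  unfolding jac_def
proof (clarify)
  fix S assume S: "A_maximal n S"
  have SI: "A_ideal n S" using S by (rule maxI)
  show "F \<in> S"
  proof (rule ccontr)
    assume FS: "F \<notin> S"
    define T where "T = {Q. \<exists>s\<in>S. \<exists>R. congI n Q (s + R * F)}"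
    have S0: "0 \<in> S" using SI by (simp add: A_ideal_def)
    have TI: "A_ideal n T"
      unfolding A_ideal_def
    proof (intro conjI ballI allI impI)
      show "0 \<in> T" unfolding T_def using S0 by (intro CollectI bexI[of _ 0] exI[of _ 0]) (simp_all add: congI_refl)
    next
      fix P Q assume "P \<in> T" "Q \<in> T"
      then obtain s1 R1 s2 R2 where h: "s1 \<in> S" "congI n P (s1 + R1 * F)" "s2 \<in> S" "congI n Q (s2 + R2 * F)"
        unfolding T_def by blast
      have "s1 + s2 \<in> S" using SI h by (simp add: A_ideal_def)
      moreover have "congI n (P + Q) ((s1 + s2) + (R1 + R2) * F)"
        using inI_add[of "P - (s1 + R1 * F)" "Q - (s2 + R2 * F)"] h
        by (simp add: congI_inI algebra_simps)
      ultimately show "P + Q \<in> T" unfolding T_def by blast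
    next
      fix P R assume "P \<in> T"
      then obtain s1 R1 where h: "s1 \<in> S" "congI n P (s1 + R1 * F)" unfolding T_def by blast
      have "R * s1 \<in> S" using SI h by (simp add: A_ideal_def)
      moreover have "congI n (R * P) (R * s1 + (R * R1) * F)"
        using inI_mult[of "P - (s1 + R1 * F)" R] h by (simp add: congI_inI algebra_simps)
      ultimately show "R * P \<in> T" unfolding T_def by blast
    next
      fix P Q assume "P \<in> T" "congI n P Q"
      then obtain s1 R1 where h: "s1 \<in> S" "congI n P (s1 + R1 * F)" "congI n P Q" unfolding T_def by blast
      have "congI n Q (s1 + R1 * F)" using congI_trans[OF congI_sym[OF h(3)] h(2)] .
      thus "Q \<in> T" using h(1) unfolding T_def by blast
    qed
    have ST: "S \<subseteq> T"
    proof
      fix x assume x: "x \<in> S"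
      show "x \<in> T" unfolding T_def by (intro CollectI bexI[OF _ x] exI[of _ 0]) (simp add: congI_refl)
    qed
    have FT: "F \<in> T" unfolding T_def using S0 by (intro CollectI bexI[of _ 0] exI[of _ 1]) (simp_all add: congI_refl)
    have "T \<noteq> S" using FT FS by blast
    hence "1 \<in> T" using S TI ST unfolding A_maximal_def by blast
    then obtain s R where sR: "s \<in> S" "congI n 1 (s + R * F)" unfolding T_def by blast
    have FFS: "F * F \<in> S"
      using SI S0 congI_sym[OF sq] unfolding A_ideal_def by blast
    have "F * s + R * (F * F) \<in> S" using SI sR(1) FFS unfolding A_ideal_def
      by (metis mult.commute)
    moreover have "congI n (F * s + R * (F * F)) F"
    proof -
      have "inI (F * (1 - (s + R * F)))" using sR(2) by (simp add: congI_inI inI_mult)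
      hence "inI ((-1) * (F * (1 - (s + R * F))))" by (rule inI_mult)
      thus ?thesis by (simp add: congI_inI algebra_simps)
    qed
    ultimately have "F \<in> S" using SI unfolding A_ideal_def by blast
    thus False using FS by contradiction
  qed
qed

lemma Fc_sq: "j \<in> {1..h} \<Longrightarrow> r < n \<Longrightarrow> congI n (Fc n q j r * Fc n q j r) 0"
  unfolding cong0 using P_FF by (auto simp: loc_Fc)

lemma Fc_jac: "j \<in> {1..h} \<Longrightarrow> r < n \<Longrightarrow> Fc n q j r \<in> jac n"
  by (rule sq_zero_jac[OF Fc_sq])

lemma vanish_jac: assumes V: "\<forall>r<n. \<forall>k\<in>{0..h}. poly (loc r P) (lam q k r) = 0"
  shows "P \<in> jac n"
proof -
  have "\<forall>r. \<exists>a. r < n \<longrightarrow> fr r dvd loc r P - (\<Sum>j\<in>{1..h}. smult (a j) (Fl j r))"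
  proof
    fix r show "\<exists>a. r < n \<longrightarrow> fr r dvd loc r P - (\<Sum>j\<in>{1..h}. smult (a j) (Fl j r))"
    proof (cases "r < n")
      case True
      hence "lin 0 r * Tp r dvd loc r P" using V by (intro vanish_dvd) blast
      then obtain a where "fr r dvd loc r P - (\<Sum>j\<in>{1..h}. smult (a j) (Fl j r))" using Lag by blast
      thus ?thesis by blast
    qed simp
  qed
  then obtain A where A: "\<And>r. r < n \<Longrightarrow> fr r dvd loc r P - (\<Sum>j\<in>{1..h}. smult (A r j) (Fl j r))"
    by (metis choice)
  let ?Q = "\<Sum>(j,r)\<in>{1..h}\<times>{0..<n}. sc ((\<lambda>(j,r). A r j) (j,r)) (Fc n q j r)"
  have "congI n ?Q P"
    unfolding crit'
  proof (intro allI impI)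
    fix r' assume r': "r' < n"
    have "loc r' ?Q = (\<Sum>j\<in>{1..h}. smult (A r' j) (Fl j r'))"
      by (subst loc_sum_delta[OF r', of _ _ "\<lambda>j. Fl j r'"]) (use r' in \<open>auto simp: loc_Fc\<close>)
    thus "fr r' dvd loc r' ?Q - loc r' P" using A[OF r']
      by (metis dvd_minus_iff minus_diff_eq)
  qed
  moreover have "?Q \<in> jac n"
    by (rule jac_sum) (auto intro!: jac_sc Fc_jac)
  ultimately show ?thesis using jac_cong by blast
qed

lemma jac_iff: "P \<in> jac n \<longleftrightarrow> (\<forall>r<n. \<forall>k\<in>{0..h}. poly (loc r P) (lam q k r) = 0)"
  using jac_vanish vanish_jac by blast

end

lemma smult_sum_right: "smult a (\<Sum>i\<in>S. f i) = (\<Sum>i\<in>S. smult a (f i))"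
  by (induction S rule: infinite_finite_induct) (auto simp: smult_add_right)

lemma sc_sum_right: "sc a (\<Sum>i\<in>S. f i) = (\<Sum>i\<in>S. sc a (f i))"
  by (simp add: sc_def smult_sum_right)

lemma sc_sc: "sc a (sc b P) = sc (a * b) P"
  by (simp add: sc_def mult.commute)

lemma sc_sum_left: "(\<Sum>i\<in>S. sc (a i) P) = sc (\<Sum>i\<in>S. a i) P"
proof -
  have "(\<Sum>i\<in>S. smult [:a i:] P) = smult (\<Sum>i\<in>S. [:a i:]) P" by (rule smult_sum[symmetric])
  thus ?thesis by (simp add: sc_def sum_to_poly)
qed

lemma sc_add_left: "sc a P + sc b P = sc (a + b) P"
proof -
  have "smult [:a:] P + smult [:b:] P = smult ([:a:] + [:b:]) P" by (simp only: smult_add_left)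
  thus ?thesis by (simp add: sc_def)
qed

lemma sc_add_right: "sc a P + sc a Q = sc a (P + Q)"
  by (simp add: sc_def smult_add_right)

lemma sc_diff_right: "sc a P - sc a Q = sc a (P - Q)"
  by (simp add: sc_def smult_diff_right)

lemma sc_0[simp]: "sc 0 P = 0" by (simp add: sc_def)

lemma triang_indep:
  fixes w :: "nat \<Rightarrow> complex poly"
  assumes "\<forall>l\<in>{1..N}. coeff (w l) (l - 1) = 1 \<and> (\<forall>k\<ge>l. coeff (w l) k = 0)"
    and "(\<Sum>l\<in>{1..N}. smult (d l) (w l)) = 0"
  shows "\<forall>l\<in>{1..N}. d l = 0"
  using assms
proof (induction N)
  case 0 thus ?case by simp
next
  case (Suc N)
  have cN: "coeff (w (Suc N)) N = 1" using bspec[OF Suc.prems(1), of "Suc N"] by simp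
  have cl: "coeff (w l) N = 0" if "l \<in> {1..N}" for l using bspec[OF Suc.prems(1), of l] that by simp
  have split: "(\<Sum>l\<in>{1..Suc N}. smult (d l) (w l)) = (\<Sum>l\<in>{1..N}. smult (d l) (w l)) + smult (d (Suc N)) (w (Suc N))"
    by (simp add: sum.cl_ivl_Suc)
  have "coeff (\<Sum>l\<in>{1..N}. smult (d l) (w l)) N = 0"
    by (simp add: coeff_sum cl)
  hence c2: "coeff ((\<Sum>l\<in>{1..N}. smult (d l) (w l)) + smult (d (Suc N)) (w (Suc N))) N = d (Suc N)"
    using cN by simp
  have E: "(\<Sum>l\<in>{1..N}. smult (d l) (w l)) + smult (d (Suc N)) (w (Suc N)) = 0"
    using Suc.prems(2) split by simp
  have dN: "d (Suc N) = 0" using c2 unfolding E by simp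
  have "(\<Sum>l\<in>{1..N}. smult (d l) (w l)) = 0"
    using Suc.prems(2) dN split by simp
  hence "\<forall>l\<in>{1..N}. d l = 0" using Suc.IH Suc.prems(1) by auto
  thus ?case using dN by (auto simp: le_Suc_eq)
qed

lemma triang_span:
  fixes w :: "nat \<Rightarrow> complex poly"
  assumes "\<forall>l\<in>{1..N}. coeff (w l) (l - 1) = 1 \<and> (\<forall>k\<ge>l. coeff (w l) k = 0)"
    and "\<forall>k\<ge>N. coeff p k = 0"
  shows "\<exists>d. p = (\<Sum>l\<in>{1..N}. smult (d l) (w l))"
  using assms
proof (induction N arbitrary: p)
  case 0
  hence "p = 0" by (intro poly_eqI) simp
  thus ?case by simp
next
  case (Suc N)
  let ?c = "coeff p N"
  let ?p' = "p - smult ?c (w (Suc N))"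
  have "\<forall>k\<ge>N. coeff ?p' k = 0"
  proof (intro allI impI)
    fix k assume k: "N \<le> k"
    show "coeff ?p' k = 0"
    proof (cases "k = N")
      case True thus ?thesis using bspec[OF Suc.prems(1), of "Suc N"] by simp
    next
      case False thus ?thesis using k Suc.prems by auto
    qed
  qed
  moreover have "\<forall>l\<in>{1..N}. coeff (w l) (l - 1) = 1 \<and> (\<forall>k\<ge>l. coeff (w l) k = 0)"
    using Suc.prems(1) by simp
  ultimately obtain d where d: "?p' = (\<Sum>l\<in>{1..N}. smult (d l) (w l))" using Suc.IH by blast
  have "p = (\<Sum>l\<in>{1..Suc N}. smult ((d(Suc N := ?c)) l) (w l))"
  proof -
    have "(\<Sum>l\<in>{1..N}. smult ((d(Suc N := ?c)) l) (w l)) = (\<Sum>l\<in>{1..N}. smult (d l) (w l))"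
      by (rule sum.cong) auto
    thus ?thesis using d by (simp add: algebra_simps)
  qed
  thus ?case by blast
qed

lemma dvd_small_zero:
  fixes X f :: "complex poly"
  assumes "f dvd X" "degree f = N" "f \<noteq> 0" "\<forall>k\<ge>N. coeff X k = 0"
  shows "X = 0"
proof (rule ccontr)
  assume X0: "X \<noteq> 0"
  hence "N \<le> degree X" using dvd_imp_degree_le[OF assms(1) X0] assms(2) by simp
  hence "coeff X (degree X) = 0" using assms(4) by simp
  thus False using X0 by simp
qed

context DD begin

lemma congI_add: "congI n P Q \<Longrightarrow> congI n P' Q' \<Longrightarrow> congI n (P + P') (Q + Q')"
  unfolding congI_inI using inI_add[of "P - Q" "P' - Q'"] by (simp add: algebra_simps)

lemma congI_multR: "congI n P Q \<Longrightarrow> congI n (P * R) (Q * R)"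
  unfolding congI_inI using inI_mult[of "P - Q" R] by (simp add: algebra_simps)

lemma congI_sc: "congI n P Q \<Longrightarrow> congI n (sc c P) (sc c Q)"
  unfolding congI_inI sc_mult using inI_mult[of "P - Q" "gpoly [:c:]"] by (simp add: algebra_simps)

lemma congI_sum: "(\<And>i. i \<in> A \<Longrightarrow> congI n (f i) (g i)) \<Longrightarrow> congI n (\<Sum>i\<in>A. f i) (\<Sum>i\<in>A. g i)"
  by (induction A rule: infinite_finite_induct) (auto intro: congI_add congI_refl)

definition Wl :: "nat \<Rightarrow> complex poly poly" where
  "Wl l = (\<Sum>i\<in>{0..(l - 1) div 2}. sc ((-1) ^ i * of_nat ((l - 1 - i) choose i)) (Gv ^ i * Xv ^ (l - 1 - 2*i)))"

lemma Vcls_Wl: "Vcls l s = Gv ^ s * Wl l" by (simp add: Vcls_def Wl_def)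

definition wl :: "nat \<Rightarrow> complex \<Rightarrow> complex poly" where
  "wl l z = (\<Sum>i\<in>{0..(l - 1) div 2}. monom ((-1) ^ i * of_nat ((l - 1 - i) choose i) * z^i) (l - 1 - 2*i))"

lemma const_pow: "[:z:]^i = [:z^i:]" by (induction i) (simp_all add: mult_to_poly mult.commute)

lemma ev_Wl: "ev z (Wl l) = wl l z"
proof -
  have "ev z (Wl l) = (\<Sum>i\<in>{0..(l - 1) div 2}. smult ((-1) ^ i * of_nat ((l - 1 - i) choose i)) ([:z:]^i * [:0,1:] ^ (l - 1 - 2*i)))"
    by (simp add: Wl_def)
  also have "\<dots> = wl l z" unfolding wl_def
    by (rule sum.cong[OF refl]) (simp add: const_pow monom_altdef)
  finally show ?thesis .
qed

end

context DD begin

abbreviation "VV k \<equiv> Vcls (fst k) (snd k)"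

lemma wl_tri: assumes "1 \<le> l" shows "coeff (wl l z) (l - 1) = 1 \<and> (\<forall>k\<ge>l. coeff (wl l z) k = 0)"
proof
  have "coeff (wl l z) (l - 1) = (\<Sum>i\<in>{0..(l - 1) div 2}. if i = 0 then 1 else 0)"
    unfolding wl_def coeff_sum
  proof (rule sum.cong[OF refl])
    fix i assume i: "i \<in> {0..(l - 1) div 2}"
    show "coeff (monom ((-1) ^ i * of_nat ((l - 1 - i) choose i) * z^i) (l - 1 - 2*i)) (l - 1) = (if i = 0 then 1 else 0)"
      using i by (auto simp: coeff_monom)
  qed
  thus "coeff (wl l z) (l - 1) = 1" by simp
  show "\<forall>k\<ge>l. coeff (wl l z) k = 0"
    using assms by (auto simp: wl_def coeff_sum coeff_monom intro!: sum.neutral)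
qed

lemma loc_V: "loc r (Vcls l s) = smult ((q^(2*r))^s) (wl l (q^(2*r)))"
  by (simp add: loc_def Vcls_Wl ev_Wl const_pow)

lemma idxV_eq: "idxV n = {1..n} \<times> {0..<n}" by (simp add: idxV_def)

lemma loc_Vsum: "loc r (\<Sum>k\<in>idxV n. sc (c k) (VV k))
   = (\<Sum>l\<in>{1..n}. smult (\<Sum>s\<in>{0..<n}. c (l,s) * (q^(2*r))^s) (wl l (q^(2*r))))"
proof -
  have "loc r (\<Sum>k\<in>idxV n. sc (c k) (VV k)) = (\<Sum>k\<in>{1..n} \<times> {0..<n}. smult (c k * (q^(2*r))^(snd k)) (wl (fst k) (q^(2*r))))"
    unfolding loc_sum idxV_eq by (rule sum.cong[OF refl]) (simp add: loc_V)
  also have "\<dots> = (\<Sum>l\<in>{1..n}. \<Sum>s\<in>{0..<n}. smult (c (l,s) * (q^(2*r))^s) (wl l (q^(2*r))))"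
    by (simp add: sum.cartesian_product split_beta)
  also have "\<dots> = (\<Sum>l\<in>{1..n}. smult (\<Sum>s\<in>{0..<n}. c (l,s) * (q^(2*r))^s) (wl l (q^(2*r))))"
    by (simp add: smult_sum)
  finally show ?thesis .
qed

lemma pow_comm: "(q^(2*r))^s = (q^(2*s))^r"
  by (simp only: power_mult[symmetric] mult_ac)

lemma pow_swap: "(q^(2*r))^s * inverse ((q^(2*r))^t) = (q^(2*s) * inverse (q^(2*t)))^r"
  by (simp only: pow_comm[of r s] pow_comm[of r t] power_mult_distrib power_inverse)

lemma dft_inj: assumes "\<forall>r<n. (\<Sum>s\<in>{0..<n}. a s * (q^(2*r))^s) = 0" "t < n"
  shows "a t = 0"
proof -
  have tm: "inverse (of_nat n) * (a s * (q^(2*r))^s) * inverse ((q^(2*r))^t) = a s * (inverse (of_nat n) * (q^(2*s) * inverse (q^(2*t)))^r)" for r s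
  proof -
    have "inverse (of_nat n) * (a s * (q^(2*r))^s) * inverse ((q^(2*r))^t) = a s * (inverse (of_nat n) * ((q^(2*r))^s * inverse ((q^(2*r))^t)))"
      by (simp only: mult_ac)
    thus ?thesis by (simp only: pow_swap)
  qed
  have "0 = (\<Sum>r<n. inverse (of_nat n) * (\<Sum>s\<in>{0..<n}. a s * (q^(2*r))^s) * inverse ((q^(2*r))^t))"
    using assms(1) by simp
  also have "\<dots> = (\<Sum>r<n. \<Sum>s<n. inverse (of_nat n) * (a s * (q^(2*r))^s) * inverse ((q^(2*r))^t))"
    by (simp only: sum_distrib_left sum_distrib_right lessThan_atLeast0)
  also have "\<dots> = (\<Sum>r<n. \<Sum>s<n. a s * (inverse (of_nat n) * (q^(2*s) * inverse (q^(2*t)))^r))"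
    by (simp only: tm)
  also have "\<dots> = (\<Sum>s<n. \<Sum>r<n. a s * (inverse (of_nat n) * (q^(2*s) * inverse (q^(2*t)))^r))"
    by (rule sum.swap)
  also have "\<dots> = (\<Sum>s<n. a s * (inverse (of_nat n) * (\<Sum>r<n. (q^(2*s) * inverse (q^(2*t)))^r)))"
    by (simp add: sum_distrib_left mult.assoc)
  also have "\<dots> = (\<Sum>s<n. a s * (if s = t then 1 else 0))"
    by (rule sum.cong[OF refl]) (use assms(2) delta_sum in auto)
  also have "\<dots> = a t" using assms(2) by (simp add: if_distrib cong: if_cong)
  finally show ?thesis by simp
qed

lemma dft_surj: assumes "r < n"
  shows "(\<Sum>s\<in>{0..<n}. (inverse (of_nat n) * (\<Sum>r'<n. d r' * inverse ((q^(2*r'))^s))) * (q^(2*r))^s) = d r"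
proof -
  have "(\<Sum>s\<in>{0..<n}. (inverse (of_nat n) * (\<Sum>r'<n. d r' * inverse ((q^(2*r'))^s))) * (q^(2*r))^s)
      = (\<Sum>s<n. \<Sum>r'<n. d r' * (inverse (of_nat n) * (q^(2*r) * inverse (q^(2*r')))^s))"
    by (simp add: lessThan_atLeast0[symmetric] sum_distrib_left sum_distrib_right power_mult_distrib power_inverse mult_ac)
  also have "\<dots> = (\<Sum>r'<n. \<Sum>s<n. d r' * (inverse (of_nat n) * (q^(2*r) * inverse (q^(2*r')))^s))"
    by (rule sum.swap)
  also have "\<dots> = (\<Sum>r'<n. d r' * (inverse (of_nat n) * (\<Sum>s<n. (q^(2*r) * inverse (q^(2*r')))^s)))"
    by (simp add: sum_distrib_left mult.assoc)
  also have "\<dots> = (\<Sum>r'<n. d r' * (if r = r' then 1 else 0))"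
    by (rule sum.cong[OF refl]) (use assms delta_sum in auto)
  also have "\<dots> = d r" using assms by (simp add: if_distrib cong: if_cong)
  finally show ?thesis .
qed

lemma wl_small: "\<forall>k\<ge>n. coeff (\<Sum>l\<in>{1..n}. smult (d l) (wl l z)) k = 0"
  using wl_tri by (auto simp: coeff_sum intro!: sum.neutral)

lemma V_indep: assumes "\<forall>k. k \<notin> idxV n \<longrightarrow> c k = 0" "congI n (\<Sum>k\<in>idxV n. sc (c k) (VV k)) 0"
  shows "\<forall>k. c k = 0"
proof -
  have "\<forall>r<n. \<forall>l\<in>{1..n}. (\<Sum>s\<in>{0..<n}. c (l,s) * (q^(2*r))^s) = 0"
  proof (intro allI impI ballI)
    fix r l assume r: "r < n" and l: "l \<in> {1..n}"
    have "fr r dvd (\<Sum>l\<in>{1..n}. smult (\<Sum>s\<in>{0..<n}. c (l,s) * (q^(2*r))^s) (wl l (q^(2*r))))"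
      using assms(2) r by (simp add: cong0 loc_Vsum)
    hence "(\<Sum>l\<in>{1..n}. smult (\<Sum>s\<in>{0..<n}. c (l,s) * (q^(2*r))^s) (wl l (q^(2*r)))) = 0"
      by (rule dvd_small_zero[OF _ deg_fr fr_nz wl_small])
    hence "\<forall>l\<in>{1..n}. (\<Sum>s\<in>{0..<n}. c (l,s) * (q^(2*r))^s) = 0"
      by (intro triang_indep[of n "\<lambda>l. wl l (q^(2*r))"]) (use wl_tri in auto)
    thus "(\<Sum>s\<in>{0..<n}. c (l,s) * (q^(2*r))^s) = 0" using l by blast
  qed
  hence Z: "\<forall>l\<in>{1..n}. \<forall>s<n. c (l,s) = 0"
    by (intro ballI allI impI) (rule dft_inj, auto)
  show ?thesis
  proof
    fix k :: "nat \<times> nat"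
    obtain l s where k: "k = (l,s)" by (cases k)
    show "c k = 0"
    proof (cases "k \<in> idxV n")
      case True thus ?thesis using Z k by (simp add: idxV_eq)
    next
      case False thus ?thesis using assms(1) by blast
    qed
  qed
qed

lemma V_span: "\<exists>c. (\<forall>k. k \<notin> idxV n \<longrightarrow> c k = 0) \<and> congI n P (\<Sum>k\<in>idxV n. sc (c k) (VV k))"
proof -
  have "\<forall>r. \<exists>d. loc r P mod fr r = (\<Sum>l\<in>{1..n}. smult (d l) (wl l (q^(2*r))))"
  proof
    fix r
    have "\<forall>k\<ge>n. coeff (loc r P mod fr r) k = 0"
    proof (intro allI impI)
      fix k assume k: "n \<le> k"
      show "coeff (loc r P mod fr r) k = 0"
      proof (cases "loc r P mod fr r = 0")
        case False
        hence "degree (loc r P mod fr r) < n" using degree_mod_less'[OF fr_nz False] deg_fr by simp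
        thus ?thesis using k by (simp add: coeff_eq_0)
      qed simp
    qed
    thus "\<exists>d. loc r P mod fr r = (\<Sum>l\<in>{1..n}. smult (d l) (wl l (q^(2*r))))"
      using triang_span[of n "\<lambda>l. wl l (q^(2*r))"] wl_tri by auto
  qed
  then obtain D where D: "\<And>r. loc r P mod fr r = (\<Sum>l\<in>{1..n}. smult (D r l) (wl l (q^(2*r))))"
    by metis
  define c where "c k = (if k \<in> idxV n then inverse (of_nat n) * (\<Sum>r'<n. D r' (fst k) * inverse ((q^(2*r'))^(snd k))) else 0)" for k
  have "congI n P (\<Sum>k\<in>idxV n. sc (c k) (VV k))"
    unfolding crit'
  proof (intro allI impI)
    fix r assume r: "r < n"
    have "loc r (\<Sum>k\<in>idxV n. sc (c k) (VV k)) = (\<Sum>l\<in>{1..n}. smult (\<Sum>s\<in>{0..<n}. c (l,s) * (q^(2*r))^s) (wl l (q^(2*r))))"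
      by (rule loc_Vsum)
    also have "\<dots> = (\<Sum>l\<in>{1..n}. smult (D r l) (wl l (q^(2*r))))"
    proof (rule sum.cong[OF refl])
      fix l assume l: "l \<in> {1..n}"
      have "(\<Sum>s\<in>{0..<n}. c (l,s) * (q^(2*r))^s) = (\<Sum>s\<in>{0..<n}. (inverse (of_nat n) * (\<Sum>r'<n. D r' l * inverse ((q^(2*r'))^s))) * (q^(2*r))^s)"
        by (rule sum.cong[OF refl]) (use l in \<open>simp add: c_def idxV_eq\<close>)
      also have "\<dots> = D r l" by (rule dft_surj[OF r])
      finally show "smult (\<Sum>s\<in>{0..<n}. c (l,s) * (q^(2*r))^s) (wl l (q^(2*r))) = smult (D r l) (wl l (q^(2*r)))" by simp
    qed
    also have "\<dots> = loc r P mod fr r" by (rule D[symmetric])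
    finally show "fr r dvd loc r P - loc r (\<Sum>k\<in>idxV n. sc (c k) (VV k))"
      by (simp add: minus_mod_eq_mult_div)
  qed
  moreover have "\<forall>k. k \<notin> idxV n \<longrightarrow> c k = 0" by (simp add: c_def)
  ultimately show ?thesis by blast
qed

definition cprop :: "complex poly poly \<Rightarrow> (nat \<times> nat \<Rightarrow> complex) \<Rightarrow> bool" where
  "cprop P c \<longleftrightarrow> (\<forall>k. k \<notin> idxV n \<longrightarrow> c k = 0) \<and> congI n P (\<Sum>k\<in>idxV n. sc (c k) (VV k))"

lemma cprop_unique: assumes "cprop P c" "cprop P c'" shows "c = c'"
proof -
  have "congI n (\<Sum>k\<in>idxV n. sc (c k) (VV k)) (\<Sum>k\<in>idxV n. sc (c' k) (VV k))"
  proof -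
    have a: "congI n P (\<Sum>k\<in>idxV n. sc (c k) (VV k))" and b: "congI n P (\<Sum>k\<in>idxV n. sc (c' k) (VV k))"
      using assms unfolding cprop_def by blast+
    show ?thesis by (rule congI_trans[OF congI_sym[OF a] b])
  qed
  moreover have "(\<Sum>k\<in>idxV n. sc (c k) (VV k)) - (\<Sum>k\<in>idxV n. sc (c' k) (VV k)) = (\<Sum>k\<in>idxV n. sc (c k - c' k) (VV k))"
    by (simp add: sum_subtractf[symmetric] sc_def smult_diff_left[symmetric] diff_to_poly)
  ultimately have "congI n (\<Sum>k\<in>idxV n. sc (c k - c' k) (VV k)) 0"
    by (simp add: congI_inI)
  hence "\<forall>k. c k - c' k = 0" using assms by (intro V_indep) (auto simp: cprop_def)
  thus ?thesis by auto
qed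

lemma coord_prop: "cprop P (coord n P)"
proof -
  obtain c where c: "cprop P c" using V_span unfolding cprop_def by blast
  have "\<exists>!c. cprop P c" using c cprop_unique by blast
  hence "cprop P (THE c. cprop P c)" by (rule theI')
  thus ?thesis unfolding coord_def cprop_def .
qed

lemma coord_eqI: "cprop P c \<Longrightarrow> coord n P = c"
  using cprop_unique coord_prop by blast

lemma coord_out: "k \<notin> idxV n \<Longrightarrow> coord n P k = 0"
  using coord_prop[of P] unfolding cprop_def by blast

lemma coord_cong: assumes "congI n P Q" shows "coord n P = coord n Q"
proof (rule coord_eqI)
  have "(\<forall>k. k \<notin> idxV n \<longrightarrow> coord n Q k = 0)" "congI n Q (\<Sum>k\<in>idxV n. sc (coord n Q k) (VV k))"
    using coord_prop[of Q] unfolding cprop_def by blast+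
  thus "cprop P (coord n Q)" unfolding cprop_def using congI_trans[OF assms] by blast
qed

lemma coord_lincomb: "finite S \<Longrightarrow> coord n (\<Sum>x\<in>S. sc (a x) (X x)) = (\<lambda>k. \<Sum>x\<in>S. a x * coord n (X x) k)"
proof -
  assume S: "finite S"
  show ?thesis
  proof (rule coord_eqI, unfold cprop_def, intro conjI allI impI)
    fix k assume "k \<notin> idxV n" thus "(\<Sum>x\<in>S. a x * coord n (X x) k) = 0" by (simp add: coord_out)
  next
    have cx: "congI n (X x) (\<Sum>k\<in>idxV n. sc (coord n (X x) k) (VV k))" for x
      using coord_prop[of "X x"] unfolding cprop_def by blast
    have "congI n (\<Sum>x\<in>S. sc (a x) (X x)) (\<Sum>x\<in>S. sc (a x) (\<Sum>k\<in>idxV n. sc (coord n (X x) k) (VV k)))"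
      by (rule congI_sum, rule congI_sc, rule cx)
    also have "(\<Sum>x\<in>S. sc (a x) (\<Sum>k\<in>idxV n. sc (coord n (X x) k) (VV k)))
        = (\<Sum>x\<in>S. \<Sum>k\<in>idxV n. sc (a x * coord n (X x) k) (VV k))"
      by (simp only: sc_sum_right sc_sc)
    also have "\<dots> = (\<Sum>k\<in>idxV n. \<Sum>x\<in>S. sc (a x * coord n (X x) k) (VV k))"
      by (rule sum.swap)
    also have "\<dots> = (\<Sum>k\<in>idxV n. sc (\<Sum>x\<in>S. a x * coord n (X x) k) (VV k))"
      by (simp only: sc_sum_left)
    finally show "congI n (\<Sum>x\<in>S. sc (a x) (X x)) (\<Sum>k\<in>idxV n. sc (\<Sum>x\<in>S. a x * coord n (X x) k) (VV k))" .
  qed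
qed

lemma coord_add: "coord n (P + Q) = (\<lambda>k. coord n P k + coord n Q k)"
proof (rule coord_eqI, unfold cprop_def, intro conjI allI impI)
  fix k assume "k \<notin> idxV n" thus "coord n P k + coord n Q k = 0" by (simp add: coord_out)
next
  have "congI n (P + Q) ((\<Sum>k\<in>idxV n. sc (coord n P k) (VV k)) + (\<Sum>k\<in>idxV n. sc (coord n Q k) (VV k)))"
    by (intro congI_add) (use coord_prop in \<open>simp_all add: cprop_def\<close>)
  thus "congI n (P + Q) (\<Sum>k\<in>idxV n. sc (coord n P k + coord n Q k) (VV k))"
    by (simp add: sum.distrib[symmetric] sc_add_left)
qed

lemma coord_sc: "coord n (sc c P) = (\<lambda>k. c * coord n P k)"
proof (rule coord_eqI, unfold cprop_def, intro conjI allI impI)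
  fix k assume "k \<notin> idxV n" thus "c * coord n P k = 0" by (simp add: coord_out)
next
  have "congI n (sc c P) (sc c (\<Sum>k\<in>idxV n. sc (coord n P k) (VV k)))"
    by (intro congI_sc) (use coord_prop in \<open>simp_all add: cprop_def\<close>)
  thus "congI n (sc c P) (\<Sum>k\<in>idxV n. sc (c * coord n P k) (VV k))"
    by (simp add: sc_sum_right sc_sc)
qed

lemma coord_mulX: "vecmat n (coord n P) (McKay n) = coord n (P * Xv)"
proof -
  have "congI n (P * Xv) ((\<Sum>k\<in>idxV n. sc (coord n P k) (VV k)) * Xv)"
    by (intro congI_multR) (use coord_prop in \<open>simp_all add: cprop_def\<close>)
  also have "(\<Sum>k\<in>idxV n. sc (coord n P k) (VV k)) * Xv = (\<Sum>k\<in>idxV n. sc (coord n P k) (VV k * Xv))"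
    by (simp add: sum_distrib_right sc_def)
  finally have "coord n (P * Xv) = coord n (\<Sum>k\<in>idxV n. sc (coord n P k) (VV k * Xv))"
    by (rule coord_cong)
  also have "\<dots> = (\<lambda>k'. \<Sum>k\<in>idxV n. coord n P k * coord n (VV k * Xv) k')"
    by (rule coord_lincomb) (simp add: idxV_def)
  finally show ?thesis by (simp add: vecmat_def McKay_def fun_eq_iff)
qed

end

context DD begin

lemma loc_sum_Fc: assumes r': "r' < n" and J: "J \<subseteq> {0..h}"
  shows "loc r' (\<Sum>(j,r)\<in>J\<times>{0..<n}. sc (c (j,r)) (Fc n q j r)) = (\<Sum>j\<in>J. smult (c (j,r')) (Fl j r'))"
proof (rule loc_sum_delta[OF r'])
  show "finite J" using J by (rule finite_subset) simp
  fix j r assume "j \<in> J" "r < n"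
  thus "loc r' (Fc n q j r) = (if r' = r then Fl j r' else 0)" using J r' loc_Fc[of j r r'] by auto
qed

lemma loc_sum_Gc: assumes r': "r' < n"
  shows "loc r' (\<Sum>(j,r)\<in>{1..h}\<times>{0..<n}. sc (c (j,r)) (Gc n q j r)) = (\<Sum>j\<in>{1..h}. smult (c (j,r')) (Gl j r'))"
proof (rule loc_sum_delta[OF r'])
  fix j r assume "j \<in> {1..h}" "r < n"
  thus "loc r' (Gc n q j r) = (if r' = r then Gl j r' else 0)" using r' loc_Gc[of j r r'] by auto
qed simp

lemma loc_sum_Eid: assumes r': "r' < n"
  shows "loc r' (\<Sum>(j,r)\<in>{0..h}\<times>{0..<n}. sc (c (j,r)) (Eid n q j r)) = (\<Sum>j\<in>{0..h}. smult (c (j,r')) (Eidl j r'))"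
proof (rule loc_sum_delta[OF r'])
  fix j r assume "j \<in> {0..h}" "r < n"
  thus "loc r' (Eid n q j r) = (if r' = r then Eidl j r' else 0)" using r' loc_Eid[of j r r'] by auto
qed simp

lemma comb_F: "(\<Sum>j\<in>{1..h}. smult (c j) (Fl j r)) = comb (\<lambda>j. if j = 0 then 0 else c j) (\<lambda>j. 0) r"
  by (simp add: comb_def sum0h)

lemma partA2: assumes "P \<in> jac n" shows "\<exists>c. congI n P (\<Sum>(j,r)\<in>{1..h}\<times>{0..<n}. sc (c (j,r)) (Fc n q j r))"
proof -
  have "\<forall>r. \<exists>a. r < n \<longrightarrow> fr r dvd loc r P - (\<Sum>j\<in>{1..h}. smult (a j) (Fl j r))"
  proof
    fix r show "\<exists>a. r < n \<longrightarrow> fr r dvd loc r P - (\<Sum>j\<in>{1..h}. smult (a j) (Fl j r))"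
    proof (cases "r < n")
      case True
      hence "lin 0 r * Tp r dvd loc r P" using jac_vanish[OF assms] by (intro vanish_dvd) blast
      then obtain a where "fr r dvd loc r P - (\<Sum>j\<in>{1..h}. smult (a j) (Fl j r))" using Lag by blast
      thus ?thesis by blast
    qed simp
  qed
  then obtain A where A: "\<And>r. r < n \<Longrightarrow> fr r dvd loc r P - (\<Sum>j\<in>{1..h}. smult (A r j) (Fl j r))"
    by metis
  define c where "c x = A (snd x) (fst x)" for x
  have "congI n P (\<Sum>(j,r)\<in>{1..h}\<times>{0..<n}. sc (c (j,r)) (Fc n q j r))"
    unfolding crit'
  proof (intro allI impI)
    fix r' assume r': "r' < n"
    have L: "loc r' (\<Sum>(j,r)\<in>{1..h}\<times>{0..<n}. sc (c (j,r)) (Fc n q j r)) = (\<Sum>j\<in>{1..h}. smult (A r' j) (Fl j r'))"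
      using loc_sum_Fc[OF r', of "{1..h}" c] by (simp add: c_def)
    show "fr r' dvd loc r' P - loc r' (\<Sum>(j,r)\<in>{1..h}\<times>{0..<n}. sc (c (j,r)) (Fc n q j r))"
      unfolding L by (rule A[OF r'])
  qed
  thus ?thesis by blast
qed

lemma partA3: assumes "congI n (\<Sum>(j,r)\<in>{1..h}\<times>{0..<n}. sc (c (j,r)) (Fc n q j r)) 0"
  shows "\<forall>k\<in>{1..h}\<times>{0..<n}. c k = 0"
proof
  fix k assume k: "k \<in> {1..h}\<times>{0..<n}"
  obtain j r where jr: "k = (j,r)" by (cases k)
  have r: "r < n" and j: "j \<in> {1..h}" using k jr by auto
  have e: "comb (\<lambda>i. if i = 0 then 0 else c (i,r)) (\<lambda>i. 0) r = (\<Sum>i\<in>{1..h}. smult (c (i,r)) (Fl i r))"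
    by (simp add: comb_def sum0h)
  have "fr r dvd (\<Sum>i\<in>{1..h}. smult (c (i,r)) (Fl i r))"
    using assms r loc_sum_Fc[OF r, of "{1..h}" c] unfolding cong0 by auto
  hence "fr r dvd comb (\<lambda>i. if i = 0 then 0 else c (i,r)) (\<lambda>i. 0) r" unfolding e .
  hence Z: "\<forall>i\<in>{0..h}. (if i = 0 then 0 else c (i,r)) = 0" using indep by blast
  have "(if j = 0 then 0 else c (j,r)) = 0" using j by (intro bspec[OF Z]) auto
  thus "c k = 0" using j jr by auto
qed

lemma partA4: assumes "P \<in> jac n" "Q \<in> jac n" shows "congI n (P * Q) 0"
  unfolding cong0
proof (intro allI impI)
  fix r assume r: "r < n"
  have "lin 0 r * Tp r dvd loc r P" "lin 0 r * Tp r dvd loc r Q"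
    using jac_vanish[OF assms(1) r] jac_vanish[OF assms(2) r] by (intro vanish_dvd; blast)+
  hence "(lin 0 r * Tp r) * (lin 0 r * Tp r) dvd loc r P * loc r Q" by (rule mult_dvd_mono)
  moreover have "(lin 0 r * Tp r) * (lin 0 r * Tp r) = fr r * lin 0 r" unfolding fr_S by (simp only: mult_ac)
  ultimately show "fr r dvd loc r (P * Q)" by (simp add: dvd_mult_left)
qed

lemma partB1: assumes "r < n" shows "xi n q r \<noteq> 0 \<and> idempotentA n (sc (inverse (xi n q r)) (Fc n q 0 r))"
proof
  show "xi n q r \<noteq> 0" by (rule xi_nz)
  show "idempotentA n (sc (inverse (xi n q r)) (Fc n q 0 r))"
    unfolding idempotentA_def crit'
  proof (intro allI impI)
    fix r' assume r': "r' < n"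
    show "fr r' dvd loc r' (sc (inverse (xi n q r)) (Fc n q 0 r) * sc (inverse (xi n q r)) (Fc n q 0 r)) - loc r' (sc (inverse (xi n q r)) (Fc n q 0 r))"
    proof (cases "r' = r")
      case True
      have "smult (inverse (xi n q r)) (Fl 0 r) * smult (inverse (xi n q r)) (Fl 0 r) - smult (inverse (xi n q r)) (Fl 0 r)
         = smult (inverse (xi n q r) ^ 2) (Fl 0 r * Fl 0 r - smult (xi n q r) (Fl 0 r))"
        by (rule poly_eqI_fun) (use xi_nz[of r] in \<open>simp add: field_simps power2_eq_square\<close>)
      thus ?thesis using True assms I0[of r] by (simp add: loc_Fc dvd_smult)
    next
      case False thus ?thesis using assms r' by (simp add: loc_Fc)
    qed
  qed
qed

lemma Gc_rel: assumes j: "j \<in> {1..h}" and r: "r < n"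
  shows "congI n (Gc n q j r * Gc n q j r) (sc (theta n q j r) (Gc n q j r) + sc v (Fc n q j r))
     \<longleftrightarrow> fr r dvd Gl j r * Gl j r - (smult (theta n q j r) (Gl j r) + smult v (Fl j r))"
proof -
  have j0: "j \<in> {0..h}" using j by auto
  show ?thesis unfolding crit'
  proof
    assume "\<forall>r'<n. fr r' dvd loc r' (Gc n q j r * Gc n q j r) - loc r' (sc (theta n q j r) (Gc n q j r) + sc v (Fc n q j r))"
    thus "fr r dvd Gl j r * Gl j r - (smult (theta n q j r) (Gl j r) + smult v (Fl j r))"
      using r by (auto simp: loc_Fc[OF j0] loc_Gc[OF j] dest: spec[of _ r])
  next
    assume H: "fr r dvd Gl j r * Gl j r - (smult (theta n q j r) (Gl j r) + smult v (Fl j r))"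
    show "\<forall>r'<n. fr r' dvd loc r' (Gc n q j r * Gc n q j r) - loc r' (sc (theta n q j r) (Gc n q j r) + sc v (Fc n q j r))"
      using H r by (auto simp: loc_Fc[OF j0] loc_Gc[OF j])
  qed
qed

lemma partB2: assumes j: "j \<in> {1..h}" and r: "r < n"
  shows "theta n q j r \<noteq> 0
          \<and> (\<exists>v. congI n (Gc n q j r * Gc n q j r)
                      (sc (theta n q j r) (Gc n q j r) + sc v (Fc n q j r)))
          \<and> congI n (Gc n q j r * Gc n q j r)
                      (sc (theta n q j r) (Gc n q j r) + sc (nu n q j r) (Fc n q j r))
          \<and> idempotentA n (Gp n q j r)"
proof (intro conjI)
  show "theta n q j r \<noteq> 0" by (rule theta_nz[OF j])
  show ex: "\<exists>v. congI n (Gc n q j r * Gc n q j r) (sc (theta n q j r) (Gc n q j r) + sc v (Fc n q j r))"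
    using IG[OF j, of r] Gc_rel[OF j r] by blast
  show nu: "congI n (Gc n q j r * Gc n q j r) (sc (theta n q j r) (Gc n q j r) + sc (nu n q j r) (Fc n q j r))"
    unfolding nu_def by (rule someI_ex[OF ex])
  have hv: "fr r dvd Gl j r * Gl j r - (smult (theta n q j r) (Gl j r) + smult (nu n q j r) (Fl j r))"
    using nu Gc_rel[OF j r] by blast
  have j0: "j \<in> {0..h}" using j by auto
  show "idempotentA n (Gp n q j r)"
    unfolding idempotentA_def crit'
  proof (intro allI impI)
    fix r' assume r': "r' < n"
    show "fr r' dvd loc r' (Gp n q j r * Gp n q j r) - loc r' (Gp n q j r)"
    proof (cases "r' = r")
      case True thus ?thesis using IGp[OF j hv] r by (simp add: Gp_def loc_Fc[OF j0] loc_Gc[OF j])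
    next
      case False thus ?thesis using r r' by (simp add: Gp_def loc_Fc[OF j0] loc_Gc[OF j])
    qed
  qed
qed

lemma partB3: assumes "a \<in> {0..h}\<times>{0..<n}" "b \<in> {0..h}\<times>{0..<n}" "a \<noteq> b"
  shows "congI n (Eid n q (fst a) (snd a) * Eid n q (fst b) (snd b)) 0"
  unfolding cong0
proof (intro allI impI)
  fix r' assume r': "r' < n"
  obtain ja ra jb rb where ab: "a = (ja,ra)" "b = (jb,rb)" by (cases a, cases b)
  have h: "ja \<in> {0..h}" "ra < n" "jb \<in> {0..h}" "rb < n" using assms ab by auto
  show "fr r' dvd loc r' (Eid n q (fst a) (snd a) * Eid n q (fst b) (snd b))"
  proof (cases "ra = r' \<and> rb = r'")
    case True
    hence "ja \<noteq> jb" using assms(3) ab by auto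
    thus ?thesis using True h orth_loc[of ja jb r'] ab r' by (simp add: loc_Eid)
  next
    case False thus ?thesis using h ab r' by (auto simp: loc_Eid)
  qed
qed

lemma poly_sum_Eidl: assumes "k \<in> {0..h}"
  shows "poly (\<Sum>j\<in>{0..h}. smult (c j) (Eidl j r)) (lam q k r) = c k"
proof -
  have "poly (\<Sum>j\<in>{0..h}. smult (c j) (Eidl j r)) (lam q k r) = (\<Sum>j\<in>{0..h}. c j * (if j = k then 1 else 0))"
    unfolding poly_sum by (rule sum.cong[OF refl]) (use assms in \<open>simp add: poly_Eidl\<close>)
  also have "\<dots> = c k" using assms by (simp add: if_distrib cong: if_cong)
  finally show ?thesis .
qed

lemma partB4: "\<exists>c. P - (\<Sum>(j,r)\<in>{0..h}\<times>{0..<n}. sc (c (j,r)) (Eid n q j r)) \<in> jac n"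
proof -
  define c where "c x = poly (loc (snd x) P) (lam q (fst x) (snd x))" for x
  have "P - (\<Sum>(j,r)\<in>{0..h}\<times>{0..<n}. sc (c (j,r)) (Eid n q j r)) \<in> jac n"
    unfolding jac_iff
  proof (intro allI impI ballI)
    fix r k assume r: "r < n" and k: "k \<in> {0..h}"
    have "poly (loc r (P - (\<Sum>(j,r)\<in>{0..h}\<times>{0..<n}. sc (c (j,r)) (Eid n q j r)))) (lam q k r)
       = poly (loc r P) (lam q k r) - poly (\<Sum>j\<in>{0..h}. smult (c (j,r)) (Eidl j r)) (lam q k r)"
      by (simp only: loc_simps loc_sum_Eid[OF r] poly_diff)
    also have "\<dots> = 0" using poly_sum_Eidl[OF k, of "\<lambda>j. c (j,r)" r] by (simp add: c_def)
    finally show "poly (loc r (P - (\<Sum>(j,r)\<in>{0..h}\<times>{0..<n}. sc (c (j,r)) (Eid n q j r)))) (lam q k r) = 0" .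
  qed
  thus ?thesis by blast
qed

lemma partB5: assumes "(\<Sum>(j,r)\<in>{0..h}\<times>{0..<n}. sc (c (j,r)) (Eid n q j r)) \<in> jac n"
  shows "\<forall>k\<in>{0..h}\<times>{0..<n}. c k = 0"
proof
  fix k assume k: "k \<in> {0..h}\<times>{0..<n}"
  obtain j r where jr: "k = (j,r)" by (cases k)
  have r: "r < n" and j: "j \<in> {0..h}" using k jr by auto
  have "poly (loc r (\<Sum>(j,r)\<in>{0..h}\<times>{0..<n}. sc (c (j,r)) (Eid n q j r))) (lam q j r) = 0"
    using assms r j unfolding jac_iff by blast
  thus "c k = 0" using poly_sum_Eidl[OF j, of "\<lambda>i. c (i,r)" r] jr by (simp add: loc_sum_Eid[OF r])
qed

lemma partC1: assumes j: "j \<in> {0..h}" and r: "r < n" and k': "k' \<in> idxV n"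
  shows "vecmat n (coord n (Fc n q j r)) (McKay n) k' = lam q j r * coord n (Fc n q j r) k'"
proof -
  have "congI n (Fc n q j r * Xv) (sc (lam q j r) (Fc n q j r))"
    unfolding crit'
  proof (intro allI impI)
    fix r' assume r': "r' < n"
    show "fr r' dvd loc r' (Fc n q j r * Xv) - loc r' (sc (lam q j r) (Fc n q j r))"
      using EF[OF j, of r] r r' by (cases "r' = r") (simp_all add: loc_Fc[OF j])
  qed
  hence "coord n (Fc n q j r * Xv) = coord n (sc (lam q j r) (Fc n q j r))" by (rule coord_cong)
  thus ?thesis by (simp add: coord_mulX coord_sc)
qed

lemma partC2: assumes j: "j \<in> {1..h}" and r: "r < n" and k': "k' \<in> idxV n"
  shows "vecmat n (coord n (Gc n q j r)) (McKay n) k' = lam q j r * coord n (Gc n q j r) k' + coord n (Fc n q j r) k'"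
proof -
  have j0: "j \<in> {0..h}" using j by auto
  have "congI n (Gc n q j r * Xv) (sc (lam q j r) (Gc n q j r) + Fc n q j r)"
    unfolding crit'
  proof (intro allI impI)
    fix r' assume r': "r' < n"
    show "fr r' dvd loc r' (Gc n q j r * Xv) - loc r' (sc (lam q j r) (Gc n q j r) + Fc n q j r)"
      using EG[OF j, of r] r r' by (cases "r' = r") (simp_all add: loc_Fc[OF j0] loc_Gc[OF j] algebra_simps)
  qed
  hence "coord n (Gc n q j r * Xv) = coord n (sc (lam q j r) (Gc n q j r) + Fc n q j r)" by (rule coord_cong)
  thus ?thesis by (simp add: coord_mulX coord_sc coord_add)
qed

lemma coord_pairs: "finite S \<Longrightarrow> coord n (\<Sum>(j,r)\<in>S. sc (a (j,r)) (X j r)) k = (\<Sum>(j,r)\<in>S. a (j,r) * coord n (X j r) k)"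
proof -
  assume S: "finite S"
  have "(\<Sum>(j,r)\<in>S. sc (a (j,r)) (X j r)) = (\<Sum>x\<in>S. sc (a x) (X (fst x) (snd x)))"
    by (simp add: split_beta)
  hence "coord n (\<Sum>(j,r)\<in>S. sc (a (j,r)) (X j r)) k = (\<Sum>x\<in>S. a x * coord n (X (fst x) (snd x)) k)"
    using coord_lincomb[OF S, of a "\<lambda>x. X (fst x) (snd x)"] by simp
  thus ?thesis by (simp add: split_beta)
qed

definition XX :: "(nat \<times> nat \<Rightarrow> complex) \<Rightarrow> (nat \<times> nat \<Rightarrow> complex) \<Rightarrow> complex poly poly" where
  "XX a b = (\<Sum>(j,r)\<in>{0..h}\<times>{0..<n}. sc (a (j,r)) (Fc n q j r)) + (\<Sum>(j,r)\<in>{1..h}\<times>{0..<n}. sc (b (j,r)) (Gc n q j r))"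

lemma coord_XX: "coord n (XX a b) k' = (\<Sum>(j,r)\<in>{0..h}\<times>{0..<n}. a (j,r) * coord n (Fc n q j r) k')
          + (\<Sum>(j,r)\<in>{1..h}\<times>{0..<n}. b (j,r) * coord n (Gc n q j r) k')"
  unfolding XX_def coord_add by (simp add: coord_pairs)

lemma loc_XX: assumes r: "r < n" shows "loc r (XX a b) = comb (\<lambda>j. a (j,r)) (\<lambda>j. b (j,r)) r"
  unfolding XX_def comb_def loc_simps(1) loc_sum_Gc[OF r] using loc_sum_Fc[OF r, of "{0..h}" a] by simp

lemma partC3: "\<exists>a b. \<forall>k'\<in>idxV n. w k' =
          (\<Sum>(j,r)\<in>{0..h}\<times>{0..<n}. a (j,r) * coord n (Fc n q j r) k')
          + (\<Sum>(j,r)\<in>{1..h}\<times>{0..<n}. b (j,r) * coord n (Gc n q j r) k')"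
proof -
  define P where "P = (\<Sum>k\<in>idxV n. sc (w k) (VV k))"
  have cP: "coord n P = (\<lambda>k. if k \<in> idxV n then w k else 0)"
    unfolding P_def by (rule coord_eqI) (simp add: cprop_def congI_refl cong: sum.cong)
  have "\<forall>r. \<exists>ab. r < n \<longrightarrow> fr r dvd loc r P - comb (fst ab) (snd ab) r"
    using span by (metis fst_conv snd_conv)
  then obtain AB where AB: "\<And>r. r < n \<Longrightarrow> fr r dvd loc r P - comb (fst (AB r)) (snd (AB r)) r"
    by metis
  define a where "a x = fst (AB (snd x)) (fst x)" for x
  define b where "b x = snd (AB (snd x)) (fst x)" for x
  have "congI n P (XX a b)"
    unfolding crit'
  proof (intro allI impI)
    fix r assume r: "r < n"
    show "fr r dvd loc r P - loc r (XX a b)" using AB[OF r] r by (simp add: loc_XX a_def b_def)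
  qed
  hence "coord n P = coord n (XX a b)" by (rule coord_cong)
  hence "\<forall>k'\<in>idxV n. w k' = coord n (XX a b) k'" using cP by (metis)
  thus ?thesis unfolding coord_XX by blast
qed

lemma partC4: assumes "\<forall>k'\<in>idxV n.
          (\<Sum>(j,r)\<in>{0..h}\<times>{0..<n}. a (j,r) * coord n (Fc n q j r) k')
          + (\<Sum>(j,r)\<in>{1..h}\<times>{0..<n}. b (j,r) * coord n (Gc n q j r) k') = 0"
  shows "(\<forall>k\<in>{0..h}\<times>{0..<n}. a k = 0) \<and> (\<forall>k\<in>{1..h}\<times>{0..<n}. b k = 0)"
proof -
  have c0: "coord n (XX a b) = (\<lambda>k. 0)"
  proof
    fix k show "coord n (XX a b) k = 0"
      using assms coord_out[of k "XX a b"] unfolding coord_XX by (cases "k \<in> idxV n") auto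
  qed
  have "congI n (XX a b) 0"
    using coord_prop[of "XX a b"] unfolding cprop_def c0 by simp
  hence L: "\<forall>r<n. fr r dvd comb (\<lambda>j. a (j,r)) (\<lambda>j. b (j,r)) r" by (simp add: cong0 loc_XX)
  have I: "(\<forall>j\<in>{0..h}. a (j,r) = 0) \<and> (\<forall>j\<in>{1..h}. b (j,r) = 0)" if r: "r < n" for r
    using L r by (intro indep) blast
  show ?thesis
  proof (intro conjI ballI)
    fix k assume k: "k \<in> {0..h}\<times>{0..<n}"
    obtain j r where jr: "k = (j,r)" by (cases k)
    thus "a k = 0" using I[of r] k by auto
  next
    fix k assume k: "k \<in> {1..h}\<times>{0..<n}"
    obtain j r where jr: "k = (j,r)" by (cases k)
    thus "b k = 0" using I[of r] k by auto
  qed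
qed

end

theorem mainTheorem19:
  fixes n h :: nat and q :: complex
  assumes "h \<ge> 1" and "n = 2 * h + 1"
    and "q ^ n = 1" and "\<forall>k. 0 < k \<and> k < n \<longrightarrow> q ^ k \<noteq> 1"
  shows
   \<comment> \<open>(a)\<close>
   "(\<forall>j\<in>{1..h}. \<forall>r\<in>{0..<n}. Fc n q j r \<in> jac n)
    \<and> (\<forall>P\<in>jac n. \<exists>c. congI n P (\<Sum>(j,r)\<in>{1..h}\<times>{0..<n}. sc (c (j,r)) (Fc n q j r)))
    \<and> (\<forall>c. congI n (\<Sum>(j,r)\<in>{1..h}\<times>{0..<n}. sc (c (j,r)) (Fc n q j r)) 0
          \<longrightarrow> (\<forall>k\<in>{1..h}\<times>{0..<n}. c k = 0))
    \<and> (\<forall>P\<in>jac n. \<forall>Q\<in>jac n. congI n (P * Q) 0)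
   \<comment> \<open>(b)\<close>
    \<and> (\<forall>r\<in>{0..<n}. xi n q r \<noteq> 0 \<and> idempotentA n (sc (inverse (xi n q r)) (Fc n q 0 r)))
    \<and> (\<forall>j\<in>{1..h}. \<forall>r\<in>{0..<n}. theta n q j r \<noteq> 0
          \<and> (\<exists>v. congI n (Gc n q j r * Gc n q j r)
                      (sc (theta n q j r) (Gc n q j r) + sc v (Fc n q j r)))
          \<and> congI n (Gc n q j r * Gc n q j r)
                      (sc (theta n q j r) (Gc n q j r) + sc (nu n q j r) (Fc n q j r))
          \<and> idempotentA n (Gp n q j r))
    \<and> (\<forall>a\<in>{0..h}\<times>{0..<n}. \<forall>b\<in>{0..h}\<times>{0..<n}. a \<noteq> b \<longrightarrow>
          congI n (Eid n q (fst a) (snd a) * Eid n q (fst b) (snd b)) 0)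
    \<and> (\<forall>P. \<exists>c. P - (\<Sum>(j,r)\<in>{0..h}\<times>{0..<n}. sc (c (j,r)) (Eid n q j r)) \<in> jac n)
    \<and> (\<forall>c. (\<Sum>(j,r)\<in>{0..h}\<times>{0..<n}. sc (c (j,r)) (Eid n q j r)) \<in> jac n
          \<longrightarrow> (\<forall>k\<in>{0..h}\<times>{0..<n}. c k = 0))
   \<comment> \<open>(c)\<close>
    \<and> (\<forall>j\<in>{0..h}. \<forall>r\<in>{0..<n}. \<forall>k'\<in>idxV n.
          vecmat n (coord n (Fc n q j r)) (McKay n) k' = lam q j r * coord n (Fc n q j r) k')
    \<and> (\<forall>j\<in>{1..h}. \<forall>r\<in>{0..<n}. \<forall>k'\<in>idxV n.
          vecmat n (coord n (Gc n q j r)) (McKay n) k'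
            = lam q j r * coord n (Gc n q j r) k' + coord n (Fc n q j r) k')
    \<and> (\<forall>w. \<exists>a b. \<forall>k'\<in>idxV n. w k' =
          (\<Sum>(j,r)\<in>{0..h}\<times>{0..<n}. a (j,r) * coord n (Fc n q j r) k')
          + (\<Sum>(j,r)\<in>{1..h}\<times>{0..<n}. b (j,r) * coord n (Gc n q j r) k'))
    \<and> (\<forall>a b. (\<forall>k'\<in>idxV n.
          (\<Sum>(j,r)\<in>{0..h}\<times>{0..<n}. a (j,r) * coord n (Fc n q j r) k')
          + (\<Sum>(j,r)\<in>{1..h}\<times>{0..<n}. b (j,r) * coord n (Gc n q j r) k') = 0)
          \<longrightarrow> (\<forall>k\<in>{0..h}\<times>{0..<n}. a k = 0) \<and> (\<forall>k\<in>{1..h}\<times>{0..<n}. b k = 0))"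
proof -
  interpret DD n h q using assms by unfold_locales auto
  show ?thesis
    apply (intro conjI)
    subgoal using Fc_jac by auto
    subgoal using partA2 by blast
    subgoal using partA3 by blast
    subgoal using partA4 by blast
    subgoal using partB1 by auto
    subgoal using partB2 by auto
    subgoal using partB3 by blast
    subgoal using partB4 by blast
    subgoal using partB5 by blast
    subgoal using partC1 by auto
    subgoal using partC2 by auto
    subgoal using partC3 by blast
    subgoal using partC4 by blast
    done
qed


end
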